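(* Let $n\ge2$ be an integer and $\alpha\in\mathbb{R}$. Let $x_1,\dots,x_n\in\mathbb{R}$ be pairwise distinct and non-zero with $1+x_jx_k>0$ for all $j,k$. Let $A := (1+x_jx_k)_{j,k=1}^n$ and $B := \mathbf{1}_{n\times n}$ (the all-ones matrix). Then \[ (\lambda A + (1-\lambda)B)^{\circ\alpha} \leq \lambda A^{\circ\alpha} + (1-\lambda)B^{\circ\alpha} \quad\text{for all } \lambda\in[0,1] \] (in the Loewner order) if and only if $\alpha\in\mathbb{Z}^{\ge0}\cup[n,\infty)$.
   Context: For a matrix $M$ with positive entries, $M^{\circ\alpha}$ denotes the entrywise power $(m_{jk}^\alpha)$. The Loewner order on real symmetric $n\times n$ matrices: $M\le N$ iff $N-M$ is positive semidefinite. *)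

theory Defs
  imports "HOL-Analysis.Analysis"
begin

definition entrywise_powr :: "real^'n^'m \<Rightarrow> real \<Rightarrow> real^'n^'m" where
  "entrywise_powr M a = (\<chi> j k. (M $ j $ k) powr a)"

definition psd :: "real^'n^'n \<Rightarrow> bool" where
  "psd M \<longleftrightarrow> (\<forall>v. 0 \<le> v \<bullet> (M *v v))"

definition loewner_le :: "real^'n^'n \<Rightarrow> real^'n^'n \<Rightarrow> bool" where
  "loewner_le M N \<longleftrightarrow> psd (N - M)"

end

theory Submission
  imports Defs
begin

definition qf :: "'a set \<Rightarrow> ('a \<Rightarrow> 'a \<Rightarrow> real) \<Rightarrow> ('a \<Rightarrow> real) \<Rightarrow> real" where
  "qf I M v = (\<Sum>j\<in>I. \<Sum>k\<in>I. v j * M j k * v k)"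

definition bil :: "'a set \<Rightarrow> ('a \<Rightarrow> 'a \<Rightarrow> real) \<Rightarrow> ('a \<Rightarrow> real) \<Rightarrow> ('a \<Rightarrow> real) \<Rightarrow> real" where
  "bil I M v w = (\<Sum>j\<in>I. \<Sum>k\<in>I. v j * M j k * w k)"

definition psdI :: "'a set \<Rightarrow> ('a \<Rightarrow> 'a \<Rightarrow> real) \<Rightarrow> bool" where
  "psdI I M \<longleftrightarrow> (\<forall>v. 0 \<le> qf I M v)"

definition symI :: "'a set \<Rightarrow> ('a \<Rightarrow> 'a \<Rightarrow> real) \<Rightarrow> bool" where
  "symI I M \<longleftrightarrow> (\<forall>j\<in>I. \<forall>k\<in>I. M j k = M k j)"

definition dlt :: "'a \<Rightarrow> 'a \<Rightarrow> real" where "dlt p j = (if j = p then 1 else 0)"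

lemma qf_add: "qf I (\<lambda>j k. M j k + N j k) v = qf I M v + qf I N v"
  by (simp add: qf_def algebra_simps sum.distrib)

lemma qf_scale: "qf I (\<lambda>j k. c * M j k) v = c * qf I M v"
  by (simp add: qf_def sum_distrib_left algebra_simps)

lemma qf_vscale: "qf I M (\<lambda>j. c * v j) = c^2 * qf I M v"
  by (simp add: qf_def sum_distrib_left algebra_simps power2_eq_square)

lemma qf_rank1: "qf I (\<lambda>j k. z j * z k) v = (\<Sum>j\<in>I. v j * z j)^2"
  by (simp add: qf_def power2_eq_square sum_product algebra_simps)

lemma qf_hadamard_rank1: "qf I (\<lambda>j k. M j k * (z j * z k)) v = qf I M (\<lambda>j. v j * z j)"
  by (simp add: qf_def algebra_simps)

lemma qf_insert_zero:
  assumes "finite I0" "p \<notin> I0" "\<And>k. k \<in> insert p I0 \<Longrightarrow> M p k = 0" "\<And>j. j \<in> insert p I0 \<Longrightarrow> M j p = 0"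
  shows "qf (insert p I0) M v = qf I0 M v"
  using assms by (simp add: qf_def)

lemma psd_restrict:
  assumes "finite I0" "p \<notin> I0" "psdI (insert p I0) M"
  shows "psdI I0 M"
  unfolding psdI_def
proof
  fix v :: "'a \<Rightarrow> real"
  define w :: "'a \<Rightarrow> real" where "w j = (if j \<in> I0 then v j else 0)" for j
  have "qf (insert p I0) M w = qf I0 M w" using assms by (simp add: qf_def w_def)
  also have "\<dots> = qf I0 M v" unfolding qf_def w_def by (intro sum.cong) auto
  finally show "0 \<le> qf I0 M v" using assms(3) unfolding psdI_def by metis
qed

lemma qf_plus: "qf I A (\<lambda>j. v j + w j) = qf I A v + bil I A v w + bil I A w v + qf I A w"
  by (simp add: qf_def bil_def algebra_simps sum.distrib)

lemma bil_scale2: "bil I A v (\<lambda>j. d * w j) = d * bil I A v w"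
  by (simp add: bil_def sum_distrib_left algebra_simps)
lemma bil_scale1: "bil I A (\<lambda>j. d * w j) v = d * bil I A w v"
  by (simp add: bil_def sum_distrib_left algebra_simps)

lemma bil_dlt2: assumes "finite I" "p \<in> I" shows "bil I A v (dlt p) = (\<Sum>j\<in>I. v j * A j p)"
proof -
  have "\<And>j. (\<Sum>k\<in>I. v j * A j k * dlt p k) = v j * A j p"
    using assms by (simp add: dlt_def if_distrib[of "\<lambda>x. _ * x"] sum.delta' cong: if_cong)
  thus ?thesis by (simp add: bil_def)
qed

lemma bil_dlt1: assumes "finite I" "p \<in> I" shows "bil I A (dlt p) v = (\<Sum>k\<in>I. A p k * v k)"
proof -
  have "(\<Sum>j\<in>I. \<Sum>k\<in>I. dlt p j * A j k * v k) = (\<Sum>j\<in>I. if j = p then (\<Sum>k\<in>I. A p k * v k) else 0)"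
    by (intro sum.cong) (auto simp: dlt_def)
  thus ?thesis using assms by (simp add: bil_def)
qed

lemma qf_dlt: assumes "finite I" "p \<in> I" shows "qf I A (dlt p) = A p p"
proof -
  have "qf I A (dlt p) = bil I A (dlt p) (dlt p)" by (simp add: qf_def bil_def)
  also have "\<dots> = (\<Sum>k\<in>I. A p k * dlt p k)" using assms by (simp add: bil_dlt1)
  also have "\<dots> = A p p" using assms by (simp add: dlt_def if_distrib[of "\<lambda>x. _ * x"] sum.delta' cong: if_cong)
  finally show ?thesis .
qed

lemma qf_shift:
  assumes "finite I" "p \<in> I" "symI I A"
  shows "qf I A (\<lambda>j. v j + d * dlt p j)
         = qf I A v + 2 * d * (\<Sum>j\<in>I. v j * A j p) + d^2 * A p p"
proof -
  have s: "(\<Sum>k\<in>I. A p k * v k) = (\<Sum>j\<in>I. v j * A j p)"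
    using assms by (intro sum.cong) (auto simp: symI_def mult.commute)
  show ?thesis
    apply (subst qf_plus)
    using assms s by (simp add: bil_scale1 bil_scale2 bil_dlt1 bil_dlt2 qf_vscale qf_dlt)
qed

lemma psd_diag: assumes "psdI I M" "finite I" "p \<in> I" shows "0 \<le> M p p"
  using assms qf_dlt[of I p M] unfolding psdI_def by metis

lemma psd_zero_row:
  assumes "psdI I A" "symI I A" "finite I" "p \<in> I" "j \<in> I" "A p p = 0"
  shows "A j p = 0"
proof (rule ccontr)
  assume ne: "A j p \<noteq> 0"
  define d where "d = - (A j j + 1) / (2 * A j p)"
  have "0 \<le> qf I A (\<lambda>i. dlt j i + d * dlt p i)"
    using assms unfolding psdI_def by blast
  also have "\<dots> = qf I A (dlt j) + 2 * d * (\<Sum>i\<in>I. dlt j i * A i p) + d^2 * A p p"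
    by (rule qf_shift) (use assms in auto)
  also have "(\<Sum>i\<in>I. dlt j i * A i p) = A j p"
    using assms by (simp add: dlt_def if_distrib[of "\<lambda>x. x * _"] sum.delta cong: if_cong)
  also have "qf I A (dlt j) + 2 * d * A j p + d^2 * A p p = A j j + 2 * d * A j p"
    using assms by (simp add: qf_dlt)
  also have "\<dots> = -1" using ne by (simp add: d_def field_simps)
  finally show False by simp
qed

lemma schur_compl:
  assumes "psdI I A" "symI I A" "finite I" "p \<in> I"
  shows "psdI I (\<lambda>j k. A j k - A j p * A p k / A p p)"
proof (cases "A p p = 0")
  case True
  have "(\<lambda>j k. A j k - A j p * A p k / A p p) = A" using True by simp
  thus ?thesis using assms by simp
next
  case False
  have a: "A p p > 0" using psd_diag[OF assms(1,3,4)] False by simp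
  show ?thesis unfolding psdI_def
  proof
    fix v
    define c where "c = (\<Sum>j\<in>I. v j * A j p)"
    have c2: "(\<Sum>k\<in>I. A p k * v k) = c"
      unfolding c_def using assms by (intro sum.cong) (auto simp: symI_def mult.commute)
    have r: "qf I (\<lambda>j k. A j p * A p k) v = c * c"
    proof -
      have "qf I (\<lambda>j k. A j p * A p k) v = (\<Sum>j\<in>I. v j * A j p) * (\<Sum>k\<in>I. A p k * v k)"
        unfolding qf_def sum_product by (simp add: algebra_simps)
      thus ?thesis using c2 c_def by simp
    qed
    have "qf I (\<lambda>j k. A j k - A j p * A p k / A p p) v
        = qf I A v + qf I (\<lambda>j k. (-1 / A p p) * (A j p * A p k)) v"
      by (subst qf_add[symmetric]) (simp add: algebra_simps)
    also have "\<dots> = qf I A v - c * c / A p p"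
      unfolding qf_scale r by simp
    also have "\<dots> = qf I A (\<lambda>j. v j + (- c / A p p) * dlt p j)"
      using a by (subst qf_shift[OF assms(3,4,2)]) (simp add: c_def[symmetric] power2_eq_square field_simps)
    finally show "0 \<le> qf I (\<lambda>j k. A j k - A j p * A p k / A p p) v"
      using assms(1) unfolding psdI_def by simp
  qed
qed

lemma symD: "symI I M \<Longrightarrow> j \<in> I \<Longrightarrow> k \<in> I \<Longrightarrow> M j k = M k j"
  unfolding symI_def by blast

lemma sym_schur:
  assumes "symI I Q" "p \<in> I" "I0 \<subseteq> I"
  shows "symI I0 (\<lambda>j k. Q j k - Q j p * Q p k / c)"
  unfolding symI_def
proof (intro ballI)
  fix j k assume jk: "j \<in> I0" "k \<in> I0"
  have "Q j k = Q k j" "Q j p = Q p j" "Q p k = Q k p"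
    using symD[OF assms(1)] jk assms(2,3) by blast+
  thus "Q j k - Q j p * Q p k / c = Q k j - Q k p * Q p j / c" by (simp add: mult.commute)
qed

lemma schur_product:
  assumes "finite I" "psdI I P" "psdI I Q" "symI I Q"
  shows "psdI I (\<lambda>j k. P j k * Q j k)"
  using assms
proof (induction I arbitrary: Q rule: finite_induct)
  case empty
  then show ?case by (simp add: psdI_def qf_def)
next
  case (insert p I0)
  let ?I = "insert p I0"
  define Q' where "Q' j k = Q j k - Q j p * Q p k / Q p p" for j k
  have Q'psd: "psdI ?I Q'" unfolding Q'_def by (rule schur_compl) (use insert in auto)
  have symQ': "symI I0 Q'" unfolding Q'_def by (rule sym_schur[OF insert.prems(3)]) auto
  have Qpp: "0 \<le> Q p p" using psd_diag[OF insert.prems(2)] insert by auto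
  have Q'0: "Q' p k = 0" if "k \<in> ?I" for k
  proof (cases "Q p p = 0")
    case True
    have "Q k p = 0" by (rule psd_zero_row[OF insert.prems(2,3)]) (use insert that True in auto)
    moreover have "Q p k = Q k p" using symD[OF insert.prems(3)] that by blast
    ultimately show ?thesis using True unfolding Q'_def by simp
  qed (simp add: Q'_def)
  have Q'0': "Q' j p = 0" if "j \<in> ?I" for j
  proof (cases "Q p p = 0")
    case True
    have "Q j p = 0" by (rule psd_zero_row[OF insert.prems(2,3)]) (use insert that True in auto)
    thus ?thesis using True unfolding Q'_def by auto
  qed (simp add: Q'_def)
  show ?case unfolding psdI_def
  proof
    fix v
    have split: "(\<lambda>j k. P j k * Q j k) = (\<lambda>j k. P j k * Q' j k + (1 / Q p p) * (P j k * (Q j p * Q p k)))"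
      unfolding Q'_def by (auto simp: algebra_simps fun_eq_iff)
    have "qf ?I (\<lambda>j k. P j k * (Q j p * Q p k)) v = qf ?I (\<lambda>j k. P j k * (Q j p * Q k p)) v"
      unfolding qf_def
    proof (intro sum.cong refl)
      fix j k assume "j \<in> ?I" "k \<in> ?I"
      hence "Q p k = Q k p" using symD[OF insert.prems(3)] by blast
      thus "v j * (P j k * (Q j p * Q p k)) * v k = v j * (P j k * (Q j p * Q k p)) * v k" by simp
    qed
    also have "\<dots> = qf ?I P (\<lambda>j. v j * Q j p)" by (rule qf_hadamard_rank1)
    finally have r1: "0 \<le> qf ?I (\<lambda>j k. P j k * (Q j p * Q p k)) v"
      using insert.prems(1) unfolding psdI_def by simp
    have "qf ?I (\<lambda>j k. P j k * Q' j k) v = qf I0 (\<lambda>j k. P j k * Q' j k) v"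
      by (rule qf_insert_zero) (use insert Q'0 Q'0' in auto)
    also have "0 \<le> \<dots>"
    proof -
      have "psdI I0 (\<lambda>j k. P j k * Q' j k)"
        by (rule insert.IH) (use psd_restrict[OF insert(1,2)] insert.prems Q'psd symQ' in auto)
      thus ?thesis unfolding psdI_def by simp
    qed
    finally have r2: "0 \<le> qf ?I (\<lambda>j k. P j k * Q' j k) v" .
    show "0 \<le> qf ?I (\<lambda>j k. P j k * Q j k) v"
      unfolding split qf_add qf_scale using r1 r2 Qpp by simp
  qed
qed

lemma FH:
  assumes "finite I" "psdI I A" "symI I A" "\<forall>j\<in>I. \<forall>k\<in>I. 0 < A j k" "real (card I) - 2 \<le> \<beta>"
  shows "psdI I (\<lambda>j k. A j k powr \<beta>)"
  using assms
proof (induction I arbitrary: A \<beta> rule: finite_induct)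
  case empty
  then show ?case by (simp add: psdI_def qf_def)
next
  case (insert p I0)
  let ?I = "insert p I0"
  define a where "a = A p p"
  have apos: "0 < a" using insert.prems(3) unfolding a_def by auto
  define R where "R j k = A j p * A p k / a" for j k
  define Q where "Q j k = A j k - R j k" for j k
  define S where "S s j k = R j k + s * Q j k" for s j k
  have Rpos: "0 < R j k" if "j \<in> ?I" "k \<in> ?I" for j k
    using insert.prems(3) that apos unfolding R_def by auto
  have Spos: "0 < S s j k" if "j \<in> ?I" "k \<in> ?I" "0 \<le> s" "s \<le> 1" for s j k
  proof -
    have "S s j k = (1 - s) * R j k + s * A j k" unfolding S_def Q_def by (simp add: algebra_simps)
    moreover have "0 \<le> (1 - s) * R j k" using Rpos[OF that(1,2)] that by simp
    moreover have "0 \<le> s * A j k"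
    proof -
      have "0 < A j k" using insert.prems(3) that(1,2) by blast
      thus ?thesis using that(3) by simp
    qed
    moreover have "0 < (1 - s) * R j k \<or> 0 < s * A j k"
    proof (cases "s = 0")
      case True thus ?thesis using Rpos[OF that(1,2)] by simp
    next
      case False hence "0 < s" using that(3) by simp
      moreover have "0 < A j k" using insert.prems(3) that(1,2) by blast
      ultimately show ?thesis by simp
    qed
    ultimately show ?thesis by linarith
  qed
  have Qpsd: "psdI ?I Q" unfolding Q_def R_def a_def
    by (rule schur_compl) (use insert in auto)
  have symQ: "symI ?I Q" unfolding Q_def R_def a_def by (rule sym_schur[OF insert.prems(2)]) auto
  have Qp1: "Q p k = 0" for k unfolding Q_def R_def a_def using apos a_def by auto
  have Qp2: "Q j p = 0" for j unfolding Q_def R_def a_def using apos a_def by auto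
  have qfR: "qf ?I R v = (1 / a) * (\<Sum>j\<in>?I. v j * A j p)^2" for v
  proof -
    have "qf ?I R v = qf ?I (\<lambda>j k. (1/a) * (A j p * A k p)) v"
      unfolding qf_def R_def
    proof (intro sum.cong refl)
      fix j k assume "j \<in> ?I" "k \<in> ?I"
      hence "A p k = A k p" using symD[OF insert.prems(2)] by blast
      thus "v j * (A j p * A p k / a) * v k = v j * (1 / a * (A j p * A k p)) * v k" by simp
    qed
    thus ?thesis unfolding qf_scale qf_rank1 .
  qed
  have Spsd: "psdI ?I (S s)" if "0 \<le> s" for s
    unfolding psdI_def
  proof
    fix v
    have "qf ?I (S s) v = qf ?I R v + s * qf ?I Q v"
      unfolding S_def[abs_def] by (simp add: qf_add qf_scale)
    moreover have "0 \<le> qf ?I Q v" using Qpsd unfolding psdI_def by simp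
    ultimately show "0 \<le> qf ?I (S s) v" using that apos by (simp add: qfR)
  qed
  show ?case unfolding psdI_def
  proof
    fix v
    define \<psi> where "\<psi> s = qf ?I (\<lambda>j k. S s j k powr \<beta>) v" for s
    have S1: "S 1 = A" unfolding S_def Q_def by (auto simp: fun_eq_iff)
    have psi0: "0 \<le> \<psi> 0"
    proof -
      have "\<psi> 0 = qf ?I (\<lambda>j k. (1 / a powr \<beta>) * (A j p powr \<beta> * A k p powr \<beta>)) v"
        unfolding \<psi>_def qf_def S_def
      proof (intro sum.cong refl)
        fix j k assume jk: "j \<in> ?I" "k \<in> ?I"
        have "A p k = A k p" using symD[OF insert.prems(2)] jk by blast
        moreover have "0 < A j p" "0 < A k p" using insert.prems(3) jk by auto
        ultimately show "v j * (R j k + 0 * Q j k) powr \<beta> * v k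
           = v j * (1 / a powr \<beta> * (A j p powr \<beta> * A k p powr \<beta>)) * v k"
          unfolding R_def using apos by (simp add: powr_divide powr_mult)
      qed
      also have "\<dots> = (1 / a powr \<beta>) * (\<Sum>j\<in>?I. v j * A j p powr \<beta>)^2"
        unfolding qf_scale qf_rank1 ..
      finally show ?thesis by simp
    qed
    have deriv: "(\<psi> has_real_derivative qf ?I (\<lambda>j k. \<beta> * S s j k powr (\<beta> - 1) * Q j k) v) (at s)"
      if "0 \<le> s" "s \<le> 1" for s
    proof -
      have d1: "((\<lambda>s. S s j k powr \<beta>) has_real_derivative \<beta> * S s j k powr (\<beta> - 1) * Q j k) (at s)"
        if "j \<in> ?I" "k \<in> ?I" for j k
      proof -
        have "((\<lambda>s. R j k + s * Q j k) has_real_derivative Q j k) (at s)"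
          by (auto intro!: derivative_eq_intros)
        from DERIV_fun_powr[OF this, of \<beta>] Spos[OF that \<open>0 \<le> s\<close> \<open>s \<le> 1\<close>]
        show ?thesis unfolding S_def by simp
      qed
      show ?thesis unfolding \<psi>_def qf_def
        by (intro DERIV_sum DERIV_cmult DERIV_cmult_right d1) auto
    qed
    have dnonneg: "0 \<le> qf ?I (\<lambda>j k. \<beta> * S s j k powr (\<beta> - 1) * Q j k) v"
      if "0 \<le> s" "s \<le> 1" for s
    proof -
      have "qf ?I (\<lambda>j k. \<beta> * S s j k powr (\<beta> - 1) * Q j k) v
          = qf I0 (\<lambda>j k. \<beta> * S s j k powr (\<beta> - 1) * Q j k) v"
        by (rule qf_insert_zero) (use insert Qp1 Qp2 in auto)
      also have "\<dots> = \<beta> * qf I0 (\<lambda>j k. S s j k powr (\<beta> - 1) * Q j k) v"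
        by (simp add: qf_scale[symmetric] mult.assoc)
      also have "0 \<le> \<dots>"
      proof (cases "I0 = {}")
        case True
        then show ?thesis by (simp add: qf_def)
      next
        case False
        hence "card I0 \<ge> 1" using insert(1) by (simp add: Suc_le_eq card_gt_0_iff)
        hence b0: "0 \<le> \<beta>" using insert.prems(4) insert(1,2) by simp
        have "psdI I0 (\<lambda>j k. S s j k powr (\<beta> - 1))"
        proof (rule insert.IH)
          show "psdI I0 (S s)" using psd_restrict[OF insert(1,2) Spsd[OF that(1)]] .
          have "symI I0 (\<lambda>j k. A j k - A j p * A p k / a)" by (rule sym_schur[OF insert.prems(2)]) auto
          thus "symI I0 (S s)" using symD[OF insert.prems(2)] unfolding symI_def S_def Q_def R_def
            by (simp add: mult.commute)
          show "\<forall>j\<in>I0. \<forall>k\<in>I0. 0 < S s j k" using Spos that by auto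
          show "real (card I0) - 2 \<le> \<beta> - 1" using insert.prems(4) insert(1,2) by simp
        qed
        moreover have "psdI I0 Q" using psd_restrict[OF insert(1,2) Qpsd] .
        moreover have "symI I0 Q" using symQ unfolding symI_def by blast
        ultimately have "psdI I0 (\<lambda>j k. S s j k powr (\<beta> - 1) * Q j k)"
          using schur_product insert(1) by blast
        thus ?thesis using b0 unfolding psdI_def by simp
      qed
      finally show ?thesis .
    qed
    have "\<psi> 0 \<le> \<psi> 1"
    proof (rule DERIV_nonneg_imp_nondecreasing[of 0 1 \<psi>])
      fix t :: real assume "0 \<le> t" "t \<le> 1"
      thus "\<exists>y. DERIV \<psi> t :> y \<and> 0 \<le> y" using deriv dnonneg by blast
    qed simp
    moreover have "\<psi> 1 = qf ?I (\<lambda>j k. A j k powr \<beta>) v" unfolding \<psi>_def S1 by (rule refl)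
    ultimately show "0 \<le> qf ?I (\<lambda>j k. A j k powr \<beta>) v" using psi0 by simp
  qed
qed

lemma convex_between:
  fixes I :: "real set"
  assumes "convex I" "a \<in> I" "b \<in> I" "a \<le> z" "z \<le> b"
  shows "z \<in> I"
proof -
  have "z \<in> closed_segment a b" using assms(4,5) by (simp add: closed_segment_eq_real_ivl)
  thus ?thesis using assms(1-3) closed_segment_subset by blast
qed

lemma rolle_set:
  fixes f f' :: "real \<Rightarrow> real"
  assumes I: "convex I" and d: "\<And>t. t \<in> I \<Longrightarrow> (f has_real_derivative f' t) (at t)"
    and Z: "finite Z" "Z \<subseteq> I" "\<And>z. z \<in> Z \<Longrightarrow> f z = 0"
  shows "\<exists>Z'. finite Z' \<and> Z' \<subseteq> I \<and> card Z \<le> card Z' + 1 \<and> Z' \<inter> Z = {} \<and> (\<forall>z\<in>Z'. f' z = 0)"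
proof -
  have "Z \<subseteq> I \<longrightarrow> (\<forall>z\<in>Z. f z = 0) \<longrightarrow> (\<exists>Z'. finite Z' \<and> card Z \<le> card Z' + 1 \<and> Z' \<inter> Z = {}
      \<and> (\<forall>z\<in>Z'. f' z = 0 \<and> (\<exists>a\<in>Z. a < z) \<and> (\<exists>b\<in>Z. z < b)))"
    using Z(1)
  proof (induction Z rule: finite_linorder_max_induct)
    case empty
    then show ?case by auto
  next
    case (insert b A)
    show ?case
    proof (intro impI)
      assume sub: "insert b A \<subseteq> I" and zer: "\<forall>z\<in>insert b A. f z = 0"
      from insert.IH sub zer obtain A' where A': "finite A'" "card A \<le> card A' + 1" "A' \<inter> A = {}"
        "\<forall>z\<in>A'. f' z = 0 \<and> (\<exists>a\<in>A. a < z) \<and> (\<exists>b\<in>A. z < b)" by auto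
      show "\<exists>Z'. finite Z' \<and> card (insert b A) \<le> card Z' + 1 \<and> Z' \<inter> insert b A = {}
          \<and> (\<forall>z\<in>Z'. f' z = 0 \<and> (\<exists>a\<in>insert b A. a < z) \<and> (\<exists>c\<in>insert b A. z < c))"
      proof (cases "A = {}")
        case True
        then show ?thesis by (intro exI[of _ "{}"]) auto
      next
        case False
        define m where "m = Max A"
        have mA: "m \<in> A" using False insert(1) by (simp add: m_def)
        have mb: "m < b" using mA insert(2) by auto
        have Am: "\<forall>a\<in>A. a \<le> m" using insert(1) m_def by auto
        have mI: "m \<in> I" "b \<in> I" using mA sub by auto
        have seg: "t \<in> I" if "m \<le> t" "t \<le> b" for t by (rule convex_between[OF I mI that])
        have "\<exists>r. m < r \<and> r < b \<and> DERIV f r :> 0"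
        proof (rule Rolle)
          show "m < b" by fact
          show "f m = f b" using zer mA by auto
          show "continuous_on {m..b} f"
            using d seg by (intro continuous_at_imp_continuous_on ballI) (auto intro: DERIV_isCont)
          show "f differentiable at x" if "m < x" "x < b" for x
            using d seg that by (meson less_imp_le real_differentiable_def)
        qed
        then obtain r where r: "m < r" "r < b" "DERIV f r :> 0" by auto
        have "f' r = 0" using d[of r] seg r DERIV_unique by force
        have rA': "r \<notin> A'" using A'(4) Am r(1) by force
        have rA: "r \<notin> insert b A" using Am r by force
        have bA': "b \<notin> A'" using A'(4) insert(2) by force
        show ?thesis
        proof (intro exI[of _ "insert r A'"] conjI)
          show "finite (insert r A')" using A' by simp
          have "b \<notin> A" using insert(2) by auto
          thus "card (insert b A) \<le> card (insert r A') + 1" using A' rA' insert(1) by simp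
          show "insert r A' \<inter> insert b A = {}" using A'(3) rA bA' by auto
          show "\<forall>z\<in>insert r A'. f' z = 0 \<and> (\<exists>a\<in>insert b A. a < z) \<and> (\<exists>c\<in>insert b A. z < c)"
            using A'(4) \<open>f' r = 0\<close> r mA by auto
        qed
      qed
    qed
  qed
  then obtain Z' where Z': "finite Z'" "card Z \<le> card Z' + 1" "Z' \<inter> Z = {}"
      "\<forall>z\<in>Z'. f' z = 0 \<and> (\<exists>a\<in>Z. a < z) \<and> (\<exists>b\<in>Z. z < b)" using Z by auto
  have "Z' \<subseteq> I"
  proof
    fix z assume "z \<in> Z'"
    then obtain a b where "a \<in> Z" "b \<in> Z" "a < z" "z < b" using Z'(4) by auto
    thus "z \<in> I" using convex_between[OF I, of a b z] Z(2) by auto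
  qed
  thus ?thesis using Z' by auto
qed

lemma poly_roots_zero:
  fixes a :: "nat \<Rightarrow> real"
  assumes "finite Z" "r \<le> card Z" "\<And>z. z \<in> Z \<Longrightarrow> (\<Sum>i<r. a i * z ^ i) = 0"
  shows "\<forall>i<r. a i = 0"
  using assms
proof (induction r arbitrary: a Z)
  case 0
  then show ?case by simp
next
  case (Suc r)
  define g where "g t = (\<Sum>i<Suc r. a i * t ^ i)" for t
  define g' where "g' t = (\<Sum>i<r. (real (Suc i) * a (Suc i)) * t ^ i)" for t
  have dg: "(g has_real_derivative g' t) (at t)" for t
  proof -
    have "(g has_real_derivative (\<Sum>i<Suc r. a i * (real i * t ^ (i - 1)))) (at t)"
      unfolding g_def by (intro DERIV_sum DERIV_cmult) (auto intro!: derivative_eq_intros)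
    moreover have "(\<Sum>i<Suc r. a i * (real i * t ^ (i - 1))) = g' t"
      unfolding g'_def by (subst sum.lessThan_Suc_shift) (simp add: algebra_simps)
    ultimately show ?thesis by simp
  qed
  obtain Z' where Z': "finite Z'" "card Z \<le> card Z' + 1" "\<forall>z\<in>Z'. g' z = 0"
    using rolle_set[of UNIV g g' Z] dg Suc.prems unfolding g_def by auto
  have "\<forall>i<r. real (Suc i) * a (Suc i) = 0"
    by (rule Suc.IH[of Z']) (use Z' Suc.prems g'_def in auto)
  hence hi: "\<forall>i<r. a (Suc i) = 0" by simp
  obtain z where "z \<in> Z" using Suc.prems(2) by (metis Suc_le_D card.empty equals0I nat.distinct(1))
  hence "(\<Sum>i<Suc r. a i * z ^ i) = 0" using Suc.prems by auto
  moreover have "(\<Sum>i<Suc r. a i * z ^ i) = a 0" using hi by (subst sum.lessThan_Suc_shift) simp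
  ultimately have "a 0 = 0" by simp
  thus ?case using hi by (metis less_Suc_eq_0_disj)
qed

lemma term_deriv:
  fixes a b \<beta> t :: real
  assumes "0 < 1 + a * t" "0 < 1 + b * t"
  shows "((\<lambda>t. (1 + a * t) powr \<beta> * (1 + b * t) powr (- \<beta>)) has_real_derivative
          \<beta> * (a - b) * (1 + a * t) powr (\<beta> - 1) * (1 + b * t) powr (- \<beta> - 1)) (at t)"
proof -
  have da: "((\<lambda>t. 1 + a * t) has_real_derivative a) (at t)" by (auto intro!: derivative_eq_intros)
  have db: "((\<lambda>t. 1 + b * t) has_real_derivative b) (at t)" by (auto intro!: derivative_eq_intros)
  have "((\<lambda>t. (1 + a * t) powr \<beta> * (1 + b * t) powr (- \<beta>)) has_real_derivative
      (\<beta> * (1 + a * t) powr (\<beta> - 1) * a) * (1 + b * t) powr (- \<beta>)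
      + (1 + a * t) powr \<beta> * (- \<beta> * (1 + b * t) powr (- \<beta> - 1) * b)) (at t)"
    using DERIV_mult[OF DERIV_fun_powr[OF da assms(1), of \<beta>] DERIV_fun_powr[OF db assms(2), of "-\<beta>"]]
    by (simp add: mult_ac)
  moreover have "(\<beta> * (1 + a * t) powr (\<beta> - 1) * a) * (1 + b * t) powr (- \<beta>)
      + (1 + a * t) powr \<beta> * (- \<beta> * (1 + b * t) powr (- \<beta> - 1) * b)
      = \<beta> * (a - b) * (1 + a * t) powr (\<beta> - 1) * (1 + b * t) powr (- \<beta> - 1)"
  proof -
    have e1: "(1 + b * t) powr (- \<beta>) = (1 + b * t) powr (- \<beta> - 1) * (1 + b * t)"
      using powr_add[of "1 + b * t" "- \<beta> - 1" 1] assms(2) by simp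
    have e2: "(1 + a * t) powr \<beta> = (1 + a * t) powr (\<beta> - 1) * (1 + a * t)"
      using powr_add[of "1 + a * t" "\<beta> - 1" 1] assms(1) by simp
    show ?thesis unfolding e1 e2 by (simp add: algebra_simps)
  qed
  ultimately show ?thesis by simp
qed

lemma comb_zero:
  fixes y d :: "'a \<Rightarrow> real"
  assumes "finite K" "inj_on y K" "\<forall>m::nat. \<beta> \<noteq> real m" "convex I"
    "\<forall>t\<in>I. \<forall>k\<in>K. 0 < 1 + y k * t" "finite Z" "Z \<subseteq> I" "card K \<le> card Z"
    "\<forall>z\<in>Z. (\<Sum>k\<in>K. d k * (1 + y k * z) powr \<beta>) = 0"
  shows "\<forall>k\<in>K. d k = 0"
  using assms
proof (induction K arbitrary: d \<beta> Z rule: finite_induct)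
  case empty
  then show ?case by simp
next
  case (insert p K0)
  let ?K = "insert p K0"
  have ZI: "\<forall>z\<in>Z. 0 < 1 + y p * z" using insert.prems(4,6) by auto
  have K0zero: "\<forall>k\<in>K0. d k = 0"
  proof (cases "K0 = {}")
    case True then show ?thesis by simp
  next
    case False
    have b0: "\<beta> \<noteq> 0" using insert.prems(2)[rule_format, of 0] by simp
    define g where "g t = d p + (\<Sum>k\<in>K0. d k * ((1 + y k * t) powr \<beta> * (1 + y p * t) powr (- \<beta>)))" for t
    define e where "e k = d k * (\<beta> * (y k - y p))" for k
    define g' where "g' t = (1 + y p * t) powr (- \<beta> - 1) * (\<Sum>k\<in>K0. e k * (1 + y k * t) powr (\<beta> - 1))" for t
    have dg: "(g has_real_derivative g' t) (at t)" if "t \<in> I" for t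
    proof -
      have "(g has_real_derivative 0 + (\<Sum>k\<in>K0. d k * (\<beta> * (y k - y p) * (1 + y k * t) powr (\<beta> - 1) * (1 + y p * t) powr (- \<beta> - 1)))) (at t)"
        unfolding g_def
        by (intro DERIV_add DERIV_const DERIV_sum DERIV_cmult term_deriv) (use insert.prems(4) that in auto)
      moreover have "0 + (\<Sum>k\<in>K0. d k * (\<beta> * (y k - y p) * (1 + y k * t) powr (\<beta> - 1) * (1 + y p * t) powr (- \<beta> - 1))) = g' t"
        unfolding g'_def e_def by (simp add: sum_distrib_left algebra_simps)
      ultimately show ?thesis by simp
    qed
    have gz: "g z = 0" if "z \<in> Z" for z
    proof -
      have pz: "0 < 1 + y p * z" using ZI that by auto
      have inv: "(1 + y p * z) powr \<beta> * (1 + y p * z) powr (- \<beta>) = 1"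
        using pz by (simp add: powr_add[symmetric])
      have "(\<Sum>k\<in>?K. d k * (1 + y k * z) powr \<beta>) * (1 + y p * z) powr (- \<beta>)
          = d p * ((1 + y p * z) powr \<beta> * (1 + y p * z) powr (- \<beta>))
            + (\<Sum>k\<in>K0. d k * ((1 + y k * z) powr \<beta> * (1 + y p * z) powr (- \<beta>)))"
        using insert(1,2) by (simp add: sum_distrib_right sum_distrib_left algebra_simps)
      also have "\<dots> = g z" unfolding g_def inv by simp
      finally have "(\<Sum>k\<in>?K. d k * (1 + y k * z) powr \<beta>) * (1 + y p * z) powr (- \<beta>) = g z" .
      thus ?thesis using insert.prems(8) that by simp
    qed
    obtain Z' where Z': "finite Z'" "Z' \<subseteq> I" "card Z \<le> card Z' + 1" "\<forall>z\<in>Z'. g' z = 0"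
      using rolle_set[OF insert.prems(3) dg, of Z] insert.prems gz by auto
    have "\<forall>k\<in>K0. e k = 0"
    proof (rule insert.IH[of "\<beta> - 1" Z' e])
      show "inj_on y K0" using insert.prems(1) by auto
      show "\<forall>m::nat. \<beta> - 1 \<noteq> real m"
      proof
        fix m :: nat show "\<beta> - 1 \<noteq> real m" using insert.prems(2)[rule_format, of "Suc m"] by auto
      qed
      show "convex I" by fact
      show "\<forall>t\<in>I. \<forall>k\<in>K0. 0 < 1 + y k * t" using insert.prems(4) by auto
      show "finite Z'" "Z' \<subseteq> I" by fact+
      show "card K0 \<le> card Z'" using Z'(3) insert.prems(7) insert(1,2) by simp
      show "\<forall>z\<in>Z'. (\<Sum>k\<in>K0. e k * (1 + y k * z) powr (\<beta> - 1)) = 0"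
      proof
        fix z assume z: "z \<in> Z'"
        have "0 < 1 + y p * z" using insert.prems(4) Z'(2) z by auto
        hence "(1 + y p * z) powr (- \<beta> - 1) \<noteq> 0" by simp
        moreover have "(1 + y p * z) powr (- \<beta> - 1) * (\<Sum>k\<in>K0. e k * (1 + y k * z) powr (\<beta> - 1)) = 0"
          using Z'(4) z unfolding g'_def by blast
        ultimately show "(\<Sum>k\<in>K0. e k * (1 + y k * z) powr (\<beta> - 1)) = 0" by simp
      qed
    qed
    moreover have "\<forall>k\<in>K0. y k \<noteq> y p" using insert.prems(1) insert(2) by (auto simp: inj_on_def)
    ultimately show ?thesis using b0 unfolding e_def by auto
  qed
  obtain z where z: "z \<in> Z"
    using insert.prems(7) insert(1,2) by (metis card.empty card_insert_disjoint equals0I not_less_eq_eq zero_le)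
  have "(\<Sum>k\<in>?K. d k * (1 + y k * z) powr \<beta>) = d p * (1 + y p * z) powr \<beta>"
    using K0zero insert(1,2) by simp
  moreover have "0 < 1 + y p * z" using ZI z by auto
  ultimately have "d p = 0" using insert.prems(8) z by simp
  thus ?case using K0zero by simp
qed

lemma dpow:
  fixes a t r :: real
  assumes "0 < 1 + a * t"
  shows "((\<lambda>t. (1 + a * t) powr r) has_real_derivative r * (1 + a * t) powr (r - 1) * a) (at t)"
proof -
  have da: "((\<lambda>t. 1 + a * t) has_real_derivative a) (at t)" by (auto intro!: derivative_eq_intros)
  show ?thesis using DERIV_fun_powr[OF da assms, of r] by simp
qed

lemma convex_posset: "convex {t::real. \<forall>k. 0 < 1 + y k * t}"
  unfolding convex_def
proof (intro ballI allI impI, simp, intro allI)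
  fix a b u v :: real and k
  assume h: "\<forall>k. 0 < 1 + y k * a" "\<forall>k. 0 < 1 + y k * b" "0 \<le> u" "0 \<le> v" "u + v = 1"
  have "1 + y k * (u * a + v * b) = u * (1 + y k * a) + v * (1 + y k * b)"
    using h(5) by (simp add: algebra_simps)
  moreover have "0 \<le> u * (1 + y k * a)" using h(1)[rule_format, of k] h(3) by (intro mult_nonneg_nonneg) auto
  moreover have "0 \<le> v * (1 + y k * b)" using h(2)[rule_format, of k] h(4) by (intro mult_nonneg_nonneg) auto
  moreover have "0 < u * (1 + y k * a) \<or> 0 < v * (1 + y k * b)" using h by (cases "u = 0") auto
  ultimately show "0 < 1 + y k * (u * a + v * b)" by linarith
qed

lemma nonsing:
  fixes y z c :: "'n::finite \<Rightarrow> real"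
  assumes iy: "inj y" and iz: "inj z" and y0: "\<forall>k. y k \<noteq> 0" and z0: "\<forall>j. z j \<noteq> 0"
    and pos: "\<forall>j k. 0 < 1 + y k * z j" and an: "\<forall>m::nat. \<alpha> \<noteq> real m"
    and eq: "\<forall>j. (\<Sum>k\<in>UNIV. c k * ((1 + y k * z j) powr \<alpha> - 1 - \<alpha> * (y k * z j))) = 0"
  shows "\<forall>k. c k = 0"
proof -
  define I where "I = {t::real. \<forall>k. 0 < 1 + y k * t}"
  have cI: "convex I" unfolding I_def by (rule convex_posset)
  define \<phi> where "\<phi> t = (\<Sum>k\<in>UNIV. c k * ((1 + y k * t) powr \<alpha> - 1 - \<alpha> * (y k * t)))" for t
  define \<phi>1 where "\<phi>1 t = (\<Sum>k\<in>UNIV. c k * (\<alpha> * (1 + y k * t) powr (\<alpha> - 1) * y k - \<alpha> * y k))" for t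
  define d where "d k = c k * (\<alpha> * (\<alpha> - 1) * y k * y k)" for k
  define \<phi>2 where "\<phi>2 t = (\<Sum>k\<in>UNIV. d k * (1 + y k * t) powr (\<alpha> - 2))" for t
  have d1: "(\<phi> has_real_derivative \<phi>1 t) (at t)" if "t \<in> I" for t
    unfolding \<phi>_def \<phi>1_def
    by (intro DERIV_sum DERIV_cmult DERIV_diff dpow) (use that I_def in \<open>auto intro!: derivative_eq_intros\<close>)
  have d2: "(\<phi>1 has_real_derivative \<phi>2 t) (at t)" if "t \<in> I" for t
  proof -
    have "(\<phi>1 has_real_derivative (\<Sum>k\<in>UNIV. c k * (\<alpha> * ((\<alpha> - 1) * (1 + y k * t) powr (\<alpha> - 1 - 1) * y k) * y k - 0))) (at t)"
      unfolding \<phi>1_def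
      by (intro DERIV_sum DERIV_cmult DERIV_diff DERIV_cmult_right DERIV_const dpow) (use that I_def in auto)
    moreover have "(\<Sum>k\<in>UNIV. c k * (\<alpha> * ((\<alpha> - 1) * (1 + y k * t) powr (\<alpha> - 1 - 1) * y k) * y k - 0)) = \<phi>2 t"
      unfolding \<phi>2_def d_def by (intro sum.cong) (auto simp: algebra_simps)
    ultimately show ?thesis by simp
  qed
  define Z0 where "Z0 = insert 0 (range z)"
  have z0n: "0 \<notin> range z" using z0 by auto
  have cZ0: "card Z0 = CARD('n) + 1" unfolding Z0_def using z0n iz by (simp add: card_image)
  have Z0I: "Z0 \<subseteq> I" unfolding Z0_def I_def using pos by auto
  have phiZ0: "\<phi> t = 0" if "t \<in> Z0" for t
    using that eq unfolding Z0_def \<phi>_def by auto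
  obtain Z1 where Z1: "finite Z1" "Z1 \<subseteq> I" "card Z0 \<le> card Z1 + 1" "Z1 \<inter> Z0 = {}" "\<forall>t\<in>Z1. \<phi>1 t = 0"
    using rolle_set[OF cI d1, of Z0] Z0I phiZ0 unfolding Z0_def by auto
  have 0: "0 \<notin> Z1" using Z1(4) unfolding Z0_def by auto
  have phi10: "\<phi>1 0 = 0" unfolding \<phi>1_def by simp
  have "0 \<in> I" unfolding I_def by simp
  obtain Z2 where Z2: "finite Z2" "Z2 \<subseteq> I" "card (insert 0 Z1) \<le> card Z2 + 1" "\<forall>t\<in>Z2. \<phi>2 t = 0"
    using rolle_set[OF cI d2, of "insert 0 Z1"] Z1 phi10 \<open>0 \<in> I\<close> by auto
  have cZ2: "CARD('n) \<le> card Z2" using Z2(3) Z1(1,3) 0 cZ0 by simp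
  have "\<forall>k\<in>UNIV. d k = 0"
  proof (rule comb_zero[where I = I and Z = Z2 and \<beta> = "\<alpha> - 2" and y = y])
    show "inj_on y UNIV" using iy by simp
    show "\<forall>m::nat. \<alpha> - 2 \<noteq> real m"
    proof
      fix m :: nat show "\<alpha> - 2 \<noteq> real m" using an[rule_format, of "m + 2"] by auto
    qed
    show "\<forall>t\<in>I. \<forall>k\<in>UNIV. 0 < 1 + y k * t" unfolding I_def by auto
    show "\<forall>z\<in>Z2. (\<Sum>k\<in>UNIV. d k * (1 + y k * z) powr (\<alpha> - 2)) = 0" using Z2(4) unfolding \<phi>2_def by auto
  qed (use cI Z2 cZ2 in auto)
  moreover have "\<alpha> \<noteq> 0" "\<alpha> \<noteq> 1" using an[rule_format, of 0] an[rule_format, of 1] by auto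
  ultimately show ?thesis using y0 unfolding d_def by auto
qed

definition ff :: "real \<Rightarrow> nat \<Rightarrow> real" where "ff a m = (\<Prod>i<m. a - real i)"

lemma ff_Suc: "ff a (Suc m) = ff a m * (a - real m)"
  by (simp add: ff_def)

lemma span_image_comb:
  fixes f :: "nat \<Rightarrow> 'b::real_vector"
  assumes "y \<in> span (f ` A)" "finite A"
  shows "\<exists>c. y = (\<Sum>i\<in>A. c i *\<^sub>R f i)"
  using assms(1)
proof (induction rule: real_vector.span_induct_alt)
  case base
  show ?case by (intro exI[of _ "\<lambda>_. 0"]) simp
next
  case (step c x y)
  then obtain i0 where i0: "i0 \<in> A" "x = f i0" by auto
  from step obtain d where d: "y = (\<Sum>i\<in>A. d i *\<^sub>R f i)" by auto
  show ?case
  proof (intro exI[of _ "\<lambda>i. d i + (if i = i0 then c else 0)"])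
    have "(\<Sum>i\<in>A. (d i + (if i = i0 then c else 0)) *\<^sub>R f i)
        = (\<Sum>i\<in>A. d i *\<^sub>R f i) + (\<Sum>i\<in>A. (if i = i0 then c *\<^sub>R f i else 0))"
      by (simp add: scaleR_add_left sum.distrib if_distrib[of "\<lambda>a. a *\<^sub>R _"] cong: if_cong)
    also have "\<dots> = y + c *\<^sub>R x" using i0 assms(2) d by simp
    finally show "c *\<^sub>R x + y = (\<Sum>i\<in>A. (d i + (if i = i0 then c else 0)) *\<^sub>R f i)" by simp
  qed
qed

lemma vec_choice:
  fixes x :: "'n::finite \<Rightarrow> real"
  assumes ix: "inj x" and x0: "\<forall>j. x j \<noteq> 0" and m0: "2 \<le> m0" "m0 \<le> CARD('n) + 1"
  shows "\<exists>v::'n \<Rightarrow> real. (\<forall>m. 2 \<le> m \<and> m < m0 \<longrightarrow> (\<Sum>j\<in>UNIV. v j * x j ^ m) = 0) \<and> (\<Sum>j\<in>UNIV. v j * x j ^ m0) \<noteq> 0"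
proof -
  define w :: "nat \<Rightarrow> real^'n" where "w m = (\<chi> j. x j ^ m)" for m
  obtain y z where yz: "y \<in> span (w ` {2..<m0})" "\<And>u. u \<in> span (w ` {2..<m0}) \<Longrightarrow> orthogonal z u" "w m0 = y + z"
    using orthogonal_subspace_decomp_exists[of "w ` {2..<m0}" "w m0"] by metis
  have ip: "z \<bullet> u = (\<Sum>j\<in>UNIV. z $ j * u $ j)" for u :: "real^'n" by (simp add: inner_vec_def)
  have orth: "(\<Sum>j\<in>UNIV. z $ j * x j ^ m) = 0" if "2 \<le> m" "m < m0" for m
  proof -
    have "w m \<in> span (w ` {2..<m0})" using that by (intro span_base) auto
    hence "z \<bullet> w m = 0" using yz(2) unfolding orthogonal_def by blast
    thus ?thesis unfolding ip w_def by simp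
  qed
  have zne: "z \<noteq> 0"
  proof
    assume "z = 0"
    hence "w m0 \<in> span (w ` {2..<m0})" using yz by simp
    then obtain c where c: "w m0 = (\<Sum>i\<in>{2..<m0}. c i *\<^sub>R w i)" using span_image_comb by blast
    define a where "a l = (if l = m0 - 2 then 1 else 0) - (if l + 2 < m0 then c (l + 2) else 0)" for l
    have "\<forall>l<m0 - 1. a l = 0"
    proof (rule poly_roots_zero[of "range x"])
      show "finite (range x)" by simp
      show "m0 - 1 \<le> card (range x)" using m0 ix by (simp add: card_image)
      fix t assume "t \<in> range x"
      then obtain j where j: "t = x j" by auto
      have cj: "x j ^ m0 = (\<Sum>i\<in>{2..<m0}. c i * x j ^ i)"
        using arg_cong[OF c, of "\<lambda>u. u $ j"] by (simp add: w_def)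
      have r1: "{2..<m0} = (\<lambda>l. l + 2) ` {..<m0 - 2}"
      proof -
        have "i \<in> (\<lambda>l. l + 2) ` {..<m0 - 2}" if "i \<in> {2..<m0}" for i
          using that by (intro image_eqI[of _ _ "i - 2"]) auto
        thus ?thesis by auto
      qed
      have "(\<Sum>i\<in>{2..<m0}. c i * x j ^ i) = (\<Sum>l<m0 - 2. c (l + 2) * x j ^ (l + 2))"
        unfolding r1 by (subst sum.reindex) (auto simp: inj_on_def)
      also have "\<dots> = x j ^ 2 * (\<Sum>l<m0 - 2. c (l + 2) * x j ^ l)"
        by (simp add: sum_distrib_left power2_eq_square mult_ac)
      finally have e1: "x j ^ m0 = x j ^ 2 * (\<Sum>l<m0 - 2. c (l + 2) * x j ^ l)" by (rule trans[OF cj])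
      have "x j ^ m0 = x j ^ (2 + (m0 - 2))" by (subst le_add_diff_inverse[OF m0(1)]) (rule refl)
      also have "\<dots> = x j ^ 2 * x j ^ (m0 - 2)" by (rule power_add)
      finally have pw: "x j ^ m0 = x j ^ 2 * x j ^ (m0 - 2)" .
      have "x j ^ 2 * x j ^ (m0 - 2) = x j ^ 2 * (\<Sum>l<m0 - 2. c (l + 2) * x j ^ l)"
        using pw e1 by (rule trans[OF sym])
      moreover have "x j ^ 2 \<noteq> 0" using x0 by simp
      ultimately have e2: "x j ^ (m0 - 2) = (\<Sum>l<m0 - 2. c (l + 2) * x j ^ l)"
        using mult_left_cancel by blast
      have split: "{..<m0 - 1} = insert (m0 - 2) {..<m0 - 2}" using m0 by auto
      have "(\<Sum>l<m0 - 1. a l * t ^ l) = a (m0 - 2) * t ^ (m0 - 2) + (\<Sum>l<m0 - 2. a l * t ^ l)"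
        unfolding split by (simp add: sum.insert)
      also have "a (m0 - 2) = 1" unfolding a_def using m0 by simp
      also have "(\<Sum>l<m0 - 2. a l * t ^ l) = (\<Sum>l<m0 - 2. - (c (l + 2) * t ^ l))"
        by (intro sum.cong) (auto simp: a_def)
      also have "\<dots> = - (\<Sum>l<m0 - 2. c (l + 2) * t ^ l)" by (simp add: sum_negf)
      finally show "(\<Sum>l<m0 - 1. a l * t ^ l) = 0" using e2 j by simp
    qed
    moreover have "a (m0 - 2) = 1" unfolding a_def using m0 by simp
    moreover have "m0 - 2 < m0 - 1" using m0(1) by simp
    ultimately show False by simp
  qed
  have "z \<bullet> w m0 = z \<bullet> y + z \<bullet> z" using yz(3) by (simp add: inner_add_right)
  also have "z \<bullet> y = 0" using yz(1,2) unfolding orthogonal_def by blast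
  finally have "z \<bullet> w m0 = z \<bullet> z" by simp
  hence "z \<bullet> w m0 \<noteq> 0" using zne by simp
  hence "(\<Sum>j\<in>UNIV. z $ j * x j ^ m0) \<noteq> 0" unfolding ip w_def by simp
  thus ?thesis using orth by (intro exI[of _ "\<lambda>j. z $ j"]) auto
qed

definition PP :: "real \<Rightarrow> nat \<Rightarrow> real \<Rightarrow> real \<Rightarrow> real" where
  "PP a m s u = ff a m * u ^ m * (1 + u * s) powr (a - real m)"

definition DD :: "real \<Rightarrow> nat \<Rightarrow> real \<Rightarrow> real \<Rightarrow> real" where
  "DD a m s u = PP a m s u - (if m = 0 then 1 + a * (u * s) else if m = 1 then a * u else 0)"

lemma PP_deriv:
  assumes "0 < 1 + u * s"
  shows "((\<lambda>s. PP a m s u) has_real_derivative PP a (Suc m) s u) (at s)"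
proof -
  have "((\<lambda>s. PP a m s u) has_real_derivative ff a m * u ^ m * ((a - real m) * (1 + u * s) powr (a - real m - 1) * u)) (at s)"
    unfolding PP_def by (intro DERIV_cmult dpow assms)
  moreover have "ff a m * u ^ m * ((a - real m) * (1 + u * s) powr (a - real m - 1) * u) = PP a (Suc m) s u"
  proof -
    have e: "a - real m - 1 = a - real (Suc m)" by simp
    show ?thesis unfolding PP_def ff_Suc e by (simp add: mult_ac)
  qed
  ultimately show ?thesis by simp
qed

lemma DD_deriv:
  assumes "0 < 1 + u * s"
  shows "((\<lambda>s. DD a m s u) has_real_derivative DD a (Suc m) s u) (at s)"
proof -
  have P: "((\<lambda>s. PP a m s u) has_real_derivative PP a (Suc m) s u) (at s)" by (rule PP_deriv[OF assms])
  consider "m = 0" | "m = 1" | "2 \<le> m" by linarith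
  then show ?thesis
  proof cases
    case 1
    have L: "((\<lambda>s. 1 + a * (u * s)) has_real_derivative a * u) (at s)"
      by (auto intro!: derivative_eq_intros)
    have "(\<lambda>s. DD a m s u) = (\<lambda>s. PP a m s u - (1 + a * (u * s)))" using 1 by (simp add: DD_def fun_eq_iff)
    moreover have "DD a (Suc m) s u = PP a (Suc m) s u - a * u" using 1 by (simp add: DD_def)
    ultimately show ?thesis using DERIV_diff[OF P L] by simp
  next
    case 2
    have "(\<lambda>s. DD a m s u) = (\<lambda>s. PP a m s u - a * u)" using 2 by (simp add: DD_def fun_eq_iff)
    moreover have "DD a (Suc m) s u = PP a (Suc m) s u - 0" using 2 by (simp add: DD_def)
    ultimately show ?thesis using DERIV_diff[OF P DERIV_const[of "a * u"]] by simp
  next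
    case 3
    have "(\<lambda>s. DD a m s u) = (\<lambda>s. PP a m s u)" using 3 by (simp add: DD_def fun_eq_iff)
    moreover have "DD a (Suc m) s u = PP a (Suc m) s u" using 3 by (simp add: DD_def)
    ultimately show ?thesis using P by simp
  qed
qed

lemma DD_zero:
  "DD a m 0 u = (if m < 2 then 0 else ff a m * u ^ m)"
proof -
  consider "m = 0" | "m = 1" | "2 \<le> m" by linarith
  thus ?thesis by cases (simp_all add: DD_def PP_def ff_def)
qed

lemma exists_m0:
  fixes \<alpha> :: real
  assumes "\<forall>m::nat. \<alpha> \<noteq> real m" "\<alpha> < real N" "2 \<le> N"
  shows "\<exists>m0. 2 \<le> m0 \<and> m0 \<le> N + 1 \<and> ff \<alpha> m0 < 0"
proof (cases "\<alpha> < 0")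
  case True
  have "ff \<alpha> 3 = \<alpha> * (\<alpha> - 1) * (\<alpha> - 2)"
    by (simp add: ff_def numeral_3_eq_3 lessThan_Suc)
  also have "\<dots> < 0" using True by (intro mult_pos_neg mult_neg_neg) auto
  finally show ?thesis using assms(3) by (intro exI[of _ 3]) auto
next
  case False
  hence a0: "0 < \<alpha>" using assms(1)[rule_format, of 0] by auto
  define k where "k = nat \<lceil>\<alpha>\<rceil>"
  have kc: "real k = real_of_int \<lceil>\<alpha>\<rceil>" using a0 unfolding k_def by simp
  have "\<alpha> \<le> real k" using kc by simp
  moreover have "\<alpha> \<noteq> real k" using assms(1) by simp
  ultimately have ak: "\<alpha> < real k" by simp
  have ak1: "real k - 1 < \<alpha>" using kc ceiling_correct[of \<alpha>] by linarith
  have kN: "k \<le> N"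
  proof -
    have "\<lceil>\<alpha>\<rceil> \<le> int N" using assms(2) by (simp add: ceiling_le_iff)
    thus ?thesis unfolding k_def using assms(2) by simp
  qed
  have "0 < ff \<alpha> k" unfolding ff_def
  proof (intro prod_pos ballI)
    fix i assume "i \<in> {..<k}"
    hence "i + 1 \<le> k" by simp
    hence "real (i + 1) \<le> real k" by (simp only: of_nat_le_iff)
    thus "0 < \<alpha> - real i" using ak1 by simp
  qed
  hence "ff \<alpha> (Suc k) < 0" unfolding ff_Suc using ak by (simp add: mult_pos_neg)
  moreover have "1 \<le> k" using ak a0 by (cases k) auto
  ultimately show ?thesis using kN by (intro exI[of _ "Suc k"]) auto
qed

lemma small_neg:
  fixes x :: "'n::finite \<Rightarrow> real"
  assumes ix: "inj x" and x0: "\<forall>j. x j \<noteq> 0" and pos: "\<forall>j k. 0 < 1 + x j * x k"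
    and an: "\<forall>m::nat. \<alpha> \<noteq> real m" and aN: "\<alpha> < real CARD('n)" and N2: "2 \<le> CARD('n)"
  shows "\<exists>s v. 0 < s \<and> s \<le> 1 \<and> qf UNIV (\<lambda>j k. (1 + s * (x j * x k)) powr \<alpha> - 1 - \<alpha> * (s * (x j * x k))) v < 0"
proof -
  obtain m0 where m0: "2 \<le> m0" "m0 \<le> CARD('n) + 1" "ff \<alpha> m0 < 0" using exists_m0[OF an aN N2] by blast
  obtain v where v: "\<forall>m. 2 \<le> m \<and> m < m0 \<longrightarrow> (\<Sum>j\<in>UNIV. v j * x j ^ m) = 0" "(\<Sum>j\<in>UNIV. v j * x j ^ m0) \<noteq> 0"
    using vec_choice[OF ix x0 m0(1,2)] by blast
  define diff where "diff m s = qf UNIV (\<lambda>j k. DD \<alpha> m s (x j * x k)) v" for m s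
  have p: "0 < 1 + x j * x k * s" if "0 \<le> s" "s \<le> 1" for j k s
  proof -
    have "1 + x j * x k * s = (1 - s) + s * (1 + x j * x k)" by (simp add: algebra_simps)
    moreover have "0 < (1 - s) \<or> 0 < s * (1 + x j * x k)" using that pos by (cases "s = 1") auto
    moreover have "0 \<le> 1 - s" using that by simp
    moreover have "0 \<le> s * (1 + x j * x k)" using that pos[rule_format, of j k] by (intro mult_nonneg_nonneg) auto
    ultimately show ?thesis by linarith
  qed
  have dd: "(diff m has_real_derivative diff (Suc m) s) (at s)" if "0 \<le> s" "s \<le> 1" for m s
    unfolding diff_def qf_def
    by (intro DERIV_sum DERIV_cmult DERIV_cmult_right DD_deriv p that)
  have qfm: "qf UNIV (\<lambda>j k. (x j * x k) ^ m) v = (\<Sum>j\<in>UNIV. v j * x j ^ m)^2" for m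
    unfolding power_mult_distrib qf_rank1 ..
  have diff0: "diff m 0 = (if m < 2 then 0 else ff \<alpha> m * (\<Sum>j\<in>UNIV. v j * x j ^ m)^2)" for m
  proof (cases "m < 2")
    case True
    thus ?thesis unfolding diff_def DD_zero by (simp add: qf_def)
  next
    case False
    hence "diff m 0 = qf UNIV (\<lambda>j k. ff \<alpha> m * (x j * x k) ^ m) v" unfolding diff_def DD_zero by simp
    also have "\<dots> = ff \<alpha> m * (\<Sum>j\<in>UNIV. v j * x j ^ m)^2" unfolding qf_scale qfm ..
    finally show ?thesis using False by simp
  qed
  have low: "diff m 0 = 0" if "m < m0" for m using diff0 v(1) that by auto
  have top: "diff m0 0 < 0" using diff0 m0 v(2) by (simp add: mult_neg_pos)
  have "isCont (diff m0) 0" using dd[of 0 m0] by (intro DERIV_isCont) auto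
  hence "diff m0 \<midarrow>0\<rightarrow> diff m0 0" by (simp add: isCont_def)
  from LIM_fun_less_zero[OF this top] obtain r where r: "0 < r" "\<forall>t. t \<noteq> 0 \<and> \<bar>0 - t\<bar> < r \<longrightarrow> diff m0 t < 0" by blast
  define h where "h = min 1 (r / 2)"
  have h: "0 < h" "h \<le> 1" "h < r" using r unfolding h_def by auto
  have dall: "\<forall>m t. m < m0 \<and> 0 \<le> t \<and> t \<le> h \<longrightarrow> DERIV (diff m) t :> diff (Suc m) t"
    using dd h(2) by auto
  have m0pos: "0 < m0" using m0(1) by simp
  obtain t where t: "0 < t" "t < h" "diff 0 h = (\<Sum>m<m0. diff m 0 / fact m * h ^ m) + diff m0 t / fact m0 * h ^ m0"
    using Maclaurin[OF h(1) m0pos refl dall] by blast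
  have "diff m0 t < 0" using r t h by auto
  hence "diff 0 h < 0" using t(3) low h(1) by (simp add: divide_neg_pos mult_neg_pos)
  moreover have "diff 0 h = qf UNIV (\<lambda>j k. (1 + h * (x j * x k)) powr \<alpha> - 1 - \<alpha> * (h * (x j * x k))) v"
    unfolding diff_def DD_def PP_def by (simp add: ff_def algebra_simps)
  ultimately show ?thesis using h by (intro exI[of _ h] exI[of _ v]) auto
qed

lemma psd_kernel:
  assumes "finite I" "psdI I M" "symI I M" "qf I M v = 0" "j \<in> I"
  shows "(\<Sum>k\<in>I. M j k * v k) = 0"
proof -
  define g where "g j = (\<Sum>k\<in>I. M j k * v k)" for j
  define G where "G = (\<Sum>j\<in>I. g j * g j)"
  define C where "C = qf I M g"
  have b1: "bil I M v (\<lambda>j. t * g j) = t * G" for t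
  proof -
    have "bil I M v g = (\<Sum>k\<in>I. (\<Sum>j\<in>I. v j * M j k) * g k)"
      unfolding bil_def by (subst sum.swap) (simp add: sum_distrib_right)
    also have "\<dots> = G" unfolding G_def g_def
    proof (intro sum.cong refl)
      fix k assume k: "k \<in> I"
      have "(\<Sum>j\<in>I. v j * M j k) = (\<Sum>j\<in>I. M k j * v j)"
        using symD[OF assms(3) k] by (intro sum.cong) (auto simp: mult.commute)
      thus "(\<Sum>j\<in>I. v j * M j k) * (\<Sum>ka\<in>I. M k ka * v ka) = (\<Sum>ka\<in>I. M k ka * v ka) * (\<Sum>ka\<in>I. M k ka * v ka)"
        by simp
    qed
    finally show ?thesis by (simp add: bil_scale2)
  qed
  have b2: "bil I M (\<lambda>j. t * g j) v = t * G" for t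
  proof -
    have "bil I M g v = G" unfolding bil_def G_def g_def by (simp add: sum_distrib_left mult.assoc)
    thus ?thesis by (simp add: bil_scale1)
  qed
  have ineq: "0 \<le> 2 * t * G + t^2 * C" for t
  proof -
    have "0 \<le> qf I M (\<lambda>j. v j + t * g j)" using assms(2) unfolding psdI_def by blast
    also have "\<dots> = 2 * t * G + t^2 * C"
      unfolding qf_plus b1 b2 qf_vscale C_def using assms(4) by simp
    finally show ?thesis .
  qed
  have G0: "0 \<le> G" unfolding G_def by (intro sum_nonneg) auto
  define D where "D = \<bar>C\<bar> + 1"
  have d: "0 < D" unfolding D_def by simp
  have CD: "C \<le> D" unfolding D_def by simp
  define t where "t = - G / D"
  have e1: "2 * t * G + t^2 * C \<le> 2 * t * G + t^2 * D"
    using CD by (intro add_left_mono mult_left_mono) auto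
  have e2: "2 * t * G + t^2 * D = (- (G * G)) / D"
    unfolding t_def using d by (simp add: field_simps power2_eq_square)
  have "0 \<le> (- (G * G)) / D" using ineq[of t] e1 e2 by linarith
  hence "G * G \<le> 0" using d by (simp add: divide_le_0_iff)
  hence "G * G = 0" using zero_le_square[of G] by linarith
  hence "G = 0" by simp
  hence "\<forall>j\<in>I. g j * g j = 0" unfolding G_def using assms(1) by (subst (asm) sum_nonneg_eq_0_iff) auto
  thus ?thesis using assms(5) unfolding g_def by simp
qed

lemma abs_qf_diff:
  fixes w :: "real^'n::finite"
  assumes "norm w = 1"
  shows "\<bar>qf UNIV A (\<lambda>j. w $ j) - qf UNIV B (\<lambda>j. w $ j)\<bar> \<le> (\<Sum>j\<in>UNIV. \<Sum>k\<in>UNIV. \<bar>A j k - B j k\<bar>)"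
proof -
  have "qf UNIV A (\<lambda>j. w $ j) - qf UNIV B (\<lambda>j. w $ j) = (\<Sum>j\<in>UNIV. \<Sum>k\<in>UNIV. w $ j * (A j k - B j k) * w $ k)"
    unfolding qf_def by (simp add: sum_subtractf[symmetric] algebra_simps)
  also have "\<bar>\<dots>\<bar> \<le> (\<Sum>j\<in>UNIV. \<bar>\<Sum>k\<in>UNIV. w $ j * (A j k - B j k) * w $ k\<bar>)" by (rule sum_abs)
  also have "\<dots> \<le> (\<Sum>j\<in>UNIV. \<Sum>k\<in>UNIV. \<bar>A j k - B j k\<bar>)"
  proof (intro sum_mono)
    fix j
    have "\<bar>\<Sum>k\<in>UNIV. w $ j * (A j k - B j k) * w $ k\<bar> \<le> (\<Sum>k\<in>UNIV. \<bar>w $ j * (A j k - B j k) * w $ k\<bar>)"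
      by (rule sum_abs)
    also have "\<dots> \<le> (\<Sum>k\<in>UNIV. \<bar>A j k - B j k\<bar>)"
    proof (intro sum_mono)
      fix k
      have wj: "\<bar>w $ j\<bar> \<le> 1" "\<bar>w $ k\<bar> \<le> 1" using component_le_norm_cart[of w] assms by auto
      have "\<bar>w $ j\<bar> * \<bar>w $ k\<bar> \<le> 1" using wj by (intro mult_le_one) auto
      hence "\<bar>A j k - B j k\<bar> * (\<bar>w $ j\<bar> * \<bar>w $ k\<bar>) \<le> \<bar>A j k - B j k\<bar> * 1"
        by (intro mult_left_mono) auto
      thus "\<bar>w $ j * (A j k - B j k) * w $ k\<bar> \<le> \<bar>A j k - B j k\<bar>" by (simp add: abs_mult mult_ac)
    qed
    finally show "\<bar>\<Sum>k\<in>UNIV. w $ j * (A j k - B j k) * w $ k\<bar> \<le> (\<Sum>k\<in>UNIV. \<bar>A j k - B j k\<bar>)" .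
  qed
  finally show ?thesis .
qed

lemma qf_cont: "continuous_on S (\<lambda>w::real^'n::finite. qf UNIV A (\<lambda>j. w $ j))"
  unfolding qf_def by (intro continuous_intros)

lemma qf_min:
  fixes A :: "'n::finite \<Rightarrow> 'n \<Rightarrow> real"
  shows "\<exists>w0\<in>sphere (0::real^'n) 1. Inf ((\<lambda>w. qf UNIV A (\<lambda>j. w $ j)) ` sphere 0 1) = qf UNIV A (\<lambda>j. w0 $ j)
     \<and> (\<forall>w\<in>sphere 0 1. qf UNIV A (\<lambda>j. w0 $ j) \<le> qf UNIV A (\<lambda>j. w $ j))"
proof -
  obtain w0 where w0: "w0 \<in> sphere (0::real^'n) 1" "\<forall>w\<in>sphere 0 1. qf UNIV A (\<lambda>j. w0 $ j) \<le> qf UNIV A (\<lambda>j. w $ j)"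
    using continuous_attains_inf[OF compact_sphere _ qf_cont, of 0 1 A] by auto
  thus ?thesis by (intro bexI[of _ w0] conjI cInf_eq_minimum) auto
qed

lemma pos_s:
  fixes s u :: real
  assumes "0 \<le> s" "s \<le> 1" "0 < 1 + u"
  shows "0 < 1 + s * u"
proof (cases "s = 0")
  case True thus ?thesis by simp
next
  case False
  hence "0 < s" using assms by simp
  hence "0 < s * (1 + u)" using assms(3) by simp
  moreover have "1 + s * u = (1 - s) + s * (1 + u)" by (simp add: algebra_simps)
  ultimately show ?thesis using assms(2) by linarith
qed

lemma not_psd_H:
  fixes x :: "'n::finite \<Rightarrow> real"
  assumes ix: "inj x" and x0: "\<forall>j. x j \<noteq> 0" and pos: "\<forall>j k. 0 < 1 + x j * x k"
    and an: "\<forall>m::nat. \<alpha> \<noteq> real m" and aN: "\<alpha> < real CARD('n)" and N2: "2 \<le> CARD('n)"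
  shows "\<exists>v. qf UNIV (\<lambda>j k. (1 + x j * x k) powr \<alpha> - 1 - \<alpha> * (x j * x k)) v < 0"
proof (rule ccontr)
  define Hs where "Hs s j k = (1 + s * (x j * x k)) powr \<alpha> - 1 - \<alpha> * (s * (x j * x k))" for s j k
  assume "\<not> (\<exists>v. qf UNIV (\<lambda>j k. (1 + x j * x k) powr \<alpha> - 1 - \<alpha> * (x j * x k)) v < 0)"
  hence psd1: "0 \<le> qf UNIV (Hs 1) v" for v unfolding Hs_def by (simp add: not_less)
  define S where "S = sphere (0::real^'n) 1"
  define F where "F s w = qf UNIV (Hs s) (\<lambda>j. w $ j)" for s w
  define \<mu> where "\<mu> s = Inf (F s ` S)" for s
  have mm: "\<exists>w0\<in>S. \<mu> s = F s w0 \<and> (\<forall>w\<in>S. F s w0 \<le> F s w)" for s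
    using qf_min[of "Hs s"] unfolding \<mu>_def F_def S_def by blast
  define E where "E s s' = (\<Sum>j\<in>UNIV. \<Sum>k\<in>UNIV. \<bar>Hs s j k - Hs s' j k\<bar>)" for s s'
  have Fdiff: "\<bar>F s w - F s' w\<bar> \<le> E s s'" if "w \<in> S" for s s' w
    using abs_qf_diff[of w "Hs s" "Hs s'"] that unfolding F_def E_def S_def by simp
  have mudiff: "\<bar>\<mu> s - \<mu> s'\<bar> \<le> E s s'" for s s'
  proof -
    obtain w0 where w0: "w0 \<in> S" "\<mu> s = F s w0" "\<forall>w\<in>S. F s w0 \<le> F s w" using mm by blast
    obtain w1 where w1: "w1 \<in> S" "\<mu> s' = F s' w1" "\<forall>w\<in>S. F s' w1 \<le> F s' w" using mm by blast
    have "\<mu> s \<le> F s w1" using w0 w1 by auto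
    also have "\<dots> \<le> F s' w1 + E s s'" using Fdiff[OF w1(1), of s s'] by linarith
    finally have a: "\<mu> s \<le> \<mu> s' + E s s'" using w1 by simp
    have "\<mu> s' \<le> F s' w0" using w0 w1 by auto
    also have "\<dots> \<le> F s w0 + E s s'" using Fdiff[OF w0(1), of s s'] by linarith
    finally have b: "\<mu> s' \<le> \<mu> s + E s s'" using w0 by simp
    show ?thesis using a b by linarith
  qed
  have Econt: "((\<lambda>s'. E s' s) \<longlongrightarrow> 0) (at s)" if "0 \<le> s" "s \<le> 1" for s
  proof -
    have hp: "1 + s * (x j * x k) \<noteq> 0" for j k using pos_s[OF that pos[rule_format, of j k]] by simp
    have "((\<lambda>s'. E s' s) \<longlongrightarrow> E s s) (at s)"
      unfolding E_def Hs_def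
      by (intro tendsto_intros) (auto simp: hp)
    thus ?thesis unfolding E_def by simp
  qed
  obtain \<sigma> v where sv: "0 < \<sigma>" "\<sigma> \<le> 1" "qf UNIV (Hs \<sigma>) v < 0"
    using small_neg[OF ix x0 pos an aN N2] unfolding Hs_def by blast
  have mucont: "continuous_on {\<sigma>..1} \<mu>"
  proof (intro continuous_at_imp_continuous_on ballI)
    fix s assume s: "s \<in> {\<sigma>..1}"
    have "((\<lambda>s'. \<mu> s' - \<mu> s) \<longlongrightarrow> 0) (at s)"
    proof (rule Lim_null_comparison[OF always_eventually])
      show "\<forall>s'. norm (\<mu> s' - \<mu> s) \<le> E s' s" using mudiff by simp
      show "((\<lambda>s'. E s' s) \<longlongrightarrow> 0) (at s)" using Econt s sv(1) by auto
    qed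
    thus "isCont \<mu> s" unfolding isCont_def by (rule LIM_zero_cancel)
  qed
  define vv where "vv = (\<chi> j. v j)"
  have vvne: "vv \<noteq> 0"
  proof
    assume "vv = 0"
    hence "\<forall>j. v j = 0" unfolding vv_def by (simp add: vec_eq_iff)
    hence "qf UNIV (Hs \<sigma>) v = 0" by (simp add: qf_def)
    thus False using sv by simp
  qed
  define w where "w = vv /\<^sub>R norm vv"
  have wS: "w \<in> S" unfolding w_def S_def using vvne by simp
  have "F \<sigma> w = (1 / norm vv)^2 * qf UNIV (Hs \<sigma>) v"
  proof -
    have eq: "(\<lambda>j. w $ j) = (\<lambda>j. (1 / norm vv) * v j)"
      unfolding w_def vv_def by (simp add: fun_eq_iff divide_inverse)
    show ?thesis unfolding F_def eq qf_vscale ..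
  qed
  also have "\<dots> < 0" using sv(3) vvne by (simp add: mult_pos_neg)
  finally have Fw: "F \<sigma> w < 0" .
  have musig: "\<mu> \<sigma> < 0"
  proof -
    obtain w0 where w0: "w0 \<in> S" "\<mu> \<sigma> = F \<sigma> w0" "\<forall>w\<in>S. F \<sigma> w0 \<le> F \<sigma> w" using mm by blast
    have "F \<sigma> w0 \<le> F \<sigma> w" using w0(3) wS by blast
    thus ?thesis using Fw w0(2) by linarith
  qed
  have mu1: "0 \<le> \<mu> 1"
  proof -
    obtain w0 where "w0 \<in> S" "\<mu> 1 = F 1 w0" using mm by blast
    thus ?thesis using psd1 unfolding F_def by simp
  qed
  have "\<exists>s. \<sigma> \<le> s \<and> s \<le> 1 \<and> \<mu> s = 0"
    by (rule IVT'[of \<mu> \<sigma> 0 1]) (use musig mu1 sv(2) mucont in auto)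
  then obtain s where s: "\<sigma> \<le> s" "s \<le> 1" "\<mu> s = 0" by blast
  obtain w0 where w0: "w0 \<in> S" "\<mu> s = F s w0" "\<forall>w\<in>S. F s w0 \<le> F s w" using mm by blast
  have psds: "psdI UNIV (Hs s)" unfolding psdI_def
  proof
    fix u :: "'n \<Rightarrow> real"
    define uu where "uu = (\<chi> j. u j)"
    show "0 \<le> qf UNIV (Hs s) u"
    proof (cases "uu = 0")
      case True
      hence "\<forall>j. u j = 0" unfolding uu_def by (simp add: vec_eq_iff)
      thus ?thesis by (simp add: qf_def)
    next
      case False
      define wu where "wu = uu /\<^sub>R norm uu"
      have "wu \<in> S" unfolding wu_def S_def using False by simp
      hence "F s w0 \<le> F s wu" using w0(3) by blast
      hence "0 \<le> F s wu" using w0(2) s(3) by linarith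
      also have "F s wu = (1 / norm uu)^2 * qf UNIV (Hs s) u"
      proof -
        have eq: "(\<lambda>j. wu $ j) = (\<lambda>j. (1 / norm uu) * u j)"
          unfolding wu_def uu_def by (simp add: fun_eq_iff divide_inverse)
        show ?thesis unfolding F_def eq qf_vscale ..
      qed
      finally show ?thesis using False by (simp add: zero_le_mult_iff)
    qed
  qed
  have syms: "symI UNIV (Hs s)" unfolding symI_def Hs_def by (simp add: mult.commute)
  have q0: "qf UNIV (Hs s) (\<lambda>j. w0 $ j) = 0" using w0 s unfolding F_def by simp
  have ker: "\<forall>j. (\<Sum>k\<in>UNIV. Hs s j k * w0 $ k) = 0"
    using psd_kernel[OF _ psds syms q0] by simp
  have spos: "0 < s" using s sv by simp
  have "\<forall>k. w0 $ k = 0"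
  proof (rule nonsing[where y = "\<lambda>k. s * x k" and z = x and \<alpha> = \<alpha>])
    show "inj (\<lambda>k. s * x k)" using ix spos by (simp add: inj_def)
    show "inj x" by fact
    show "\<forall>k. s * x k \<noteq> 0" using x0 spos by simp
    show "\<forall>j. x j \<noteq> 0" by fact
    show "\<forall>j k. 0 < 1 + s * x k * x j"
    proof (intro allI)
      fix j k
      have "0 < 1 + s * (x k * x j)" using pos_s[of s "x k * x j"] s sv pos by simp
      thus "0 < 1 + s * x k * x j" by (simp add: mult.assoc)
    qed
    show "\<forall>m::nat. \<alpha> \<noteq> real m" by fact
    show "\<forall>j. (\<Sum>k\<in>UNIV. w0 $ k * ((1 + s * x k * x j) powr \<alpha> - 1 - \<alpha> * (s * x k * x j))) = 0"
    proof
      fix j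
      have "(\<Sum>k\<in>UNIV. w0 $ k * ((1 + s * x k * x j) powr \<alpha> - 1 - \<alpha> * (s * x k * x j)))
          = (\<Sum>k\<in>UNIV. Hs s j k * w0 $ k)"
        unfolding Hs_def by (intro sum.cong) (auto simp: mult_ac)
      thus "(\<Sum>k\<in>UNIV. w0 $ k * ((1 + s * x k * x j) powr \<alpha> - 1 - \<alpha> * (s * x k * x j))) = 0"
        using ker by simp
    qed
  qed
  hence "w0 = 0" by (simp add: vec_eq_iff)
  thus False using w0(1) unfolding S_def by simp
qed

lemma qf_diff: "qf I (\<lambda>j k. M j k - N j k) v = qf I M v - qf I N v"
  by (simp add: qf_def algebra_simps sum_subtractf)

lemma neg_M:
  fixes U :: "'n::finite \<Rightarrow> 'n \<Rightarrow> real"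
  assumes pos: "\<forall>j k. 0 < 1 + U j k"
    and neg: "qf UNIV (\<lambda>j k. (1 + U j k) powr \<alpha> - 1 - \<alpha> * U j k) v < 0"
  shows "\<exists>t. 0 < t \<and> t \<le> 1 \<and> qf UNIV (\<lambda>j k. t * (1 + U j k) powr \<alpha> + (1 - t) - (1 + t * U j k) powr \<alpha>) v < 0"
proof -
  define q where "q t = qf UNIV (\<lambda>j k. (1 + U j k * t) powr \<alpha>) v" for t
  define L where "L = qf UNIV (\<lambda>j k. \<alpha> * U j k) v"
  define J where "J = qf UNIV (\<lambda>j k. 1) v"
  have q0: "q 0 = J" unfolding q_def J_def by simp
  have q1: "q 1 = qf UNIV (\<lambda>j k. (1 + U j k) powr \<alpha>) v" unfolding q_def by simp
  have dq: "(q has_real_derivative L) (at 0)"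
  proof -
    have "(q has_real_derivative qf UNIV (\<lambda>j k. \<alpha> * (1 + U j k * 0) powr (\<alpha> - 1) * U j k) v) (at 0)"
      unfolding q_def qf_def by (intro DERIV_sum DERIV_cmult DERIV_cmult_right dpow) simp
    thus ?thesis unfolding L_def by simp
  qed
  have "qf UNIV (\<lambda>j k. (1 + U j k) powr \<alpha> - 1 - \<alpha> * U j k) v = q 1 - J - L"
    unfolding q1 J_def L_def qf_diff ..
  hence lt: "q 1 - q 0 < L" using neg q0 by simp
  have "((\<lambda>y. (q y - q 0) / (y - 0)) \<longlongrightarrow> L) (at 0)" using dq by (simp add: has_field_derivative_iff)
  hence "eventually (\<lambda>y. q 1 - q 0 < (q y - q 0) / (y - 0)) (at 0)" using lt by (rule order_tendstoD(1))
  hence "eventually (\<lambda>y. q 1 - q 0 < (q y - q 0) / (y - 0)) (at_right 0)" by (simp add: eventually_at_split)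
  then obtain b where b: "0 < b" "\<forall>y>0. y < b \<longrightarrow> q 1 - q 0 < (q y - q 0) / (y - 0)"
    unfolding eventually_at_right_field by blast
  define t where "t = min (b / 2) 1"
  have t: "0 < t" "t \<le> 1" "t < b" using b unfolding t_def by auto
  have key: "q 1 - q 0 < (q t - q 0) / t" using b t by auto
  have "qf UNIV (\<lambda>j k. t * (1 + U j k) powr \<alpha> + (1 - t) - (1 + t * U j k) powr \<alpha>) v
      = t * q 1 + (1 - t) * J - q t"
  proof -
    have "qf UNIV (\<lambda>j k. t * (1 + U j k) powr \<alpha> + (1 - t) - (1 + t * U j k) powr \<alpha>) v
        = qf UNIV (\<lambda>j k. t * (1 + U j k) powr \<alpha> + (1 - t) * 1) v - qf UNIV (\<lambda>j k. (1 + U j k * t) powr \<alpha>) v"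
      by (subst qf_diff[symmetric]) (simp add: mult.commute)
    also have "qf UNIV (\<lambda>j k. t * (1 + U j k) powr \<alpha> + (1 - t) * 1) v = t * q 1 + (1 - t) * J"
      unfolding qf_add qf_scale q1 J_def ..
    finally show ?thesis unfolding q_def by simp
  qed
  also have "\<dots> = t * ((q 1 - q 0) - (q t - q 0) / t)" using t q0 by (simp add: field_simps)
  also have "\<dots> < 0" using key t by (simp add: mult_pos_neg)
  finally show ?thesis using t by blast
qed

lemma qf_sum: "finite S \<Longrightarrow> qf I (\<lambda>j k. \<Sum>m\<in>S. f m j k) v = (\<Sum>m\<in>S. qf I (f m) v)"
proof (induction S rule: finite_induct)
  case empty
  then show ?case by (simp add: qf_def)
next
  case (insert a S)
  have "qf I (\<lambda>j k. \<Sum>m\<in>insert a S. f m j k) v = qf I (\<lambda>j k. f a j k + (\<Sum>m\<in>S. f m j k)) v"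
    using insert(1,2) by simp
  also have "\<dots> = qf I (f a) v + (\<Sum>m\<in>S. qf I (f m) v)" unfolding qf_add insert.IH ..
  finally show ?case using insert(1,2) by simp
qed

lemma int_entry:
  fixes u t :: real and m :: nat
  assumes "0 < 1 + u" "0 \<le> t" "t \<le> 1"
  shows "t * (1 + u) powr real m + (1 - t) - (1 + t * u) powr real m
       = (\<Sum>i\<le>m. (real (m choose i) * (t - t ^ i) + (if i = 0 then 1 - t else 0)) * u ^ i)"
proof -
  have p2: "0 < 1 + t * u" using pos_s[OF assms(2,3,1)] .
  have b1: "(1 + u) ^ m = (\<Sum>i\<le>m. real (m choose i) * u ^ i)"
    using binomial_ring[of u 1 m] by (simp add: add.commute)
  have b2: "(1 + t * u) ^ m = (\<Sum>i\<le>m. real (m choose i) * t ^ i * u ^ i)"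
    using binomial_ring[of "t * u" 1 m] by (simp add: add.commute power_mult_distrib mult.assoc)
  have d: "(\<Sum>i\<le>m. (if i = 0 then 1 - t else 0) * u ^ i) = 1 - t"
    by (simp add: if_distrib[of "\<lambda>a. a * _"] sum.delta cong: if_cong)
  have "t * (1 + u) powr real m + (1 - t) - (1 + t * u) powr real m
      = t * (1 + u) ^ m + (1 - t) - (1 + t * u) ^ m"
    using assms(1) p2 by (simp add: powr_realpow)
  also have "\<dots> = (\<Sum>i\<le>m. real (m choose i) * (t - t ^ i) * u ^ i) + (1 - t)"
  proof -
    have "t * (\<Sum>i\<le>m. real (m choose i) * u ^ i) - (\<Sum>i\<le>m. real (m choose i) * t ^ i * u ^ i)
        = (\<Sum>i\<le>m. real (m choose i) * (t - t ^ i) * u ^ i)"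
      unfolding sum_distrib_left sum_subtractf[symmetric] by (intro sum.cong) (auto simp: algebra_simps)
    thus ?thesis unfolding b1 b2 by linarith
  qed
  also have "\<dots> = (\<Sum>i\<le>m. (real (m choose i) * (t - t ^ i) + (if i = 0 then 1 - t else 0)) * u ^ i)"
  proof -
    have "(\<Sum>i\<le>m. (real (m choose i) * (t - t ^ i) + (if i = 0 then 1 - t else 0)) * u ^ i)
        = (\<Sum>i\<le>m. real (m choose i) * (t - t ^ i) * u ^ i) + (\<Sum>i\<le>m. (if i = 0 then 1 - t else 0) * u ^ i)"
      by (simp only: distrib_right sum.distrib)
    thus ?thesis using d by simp
  qed
  finally show ?thesis .
qed

lemma int_case:
  fixes x :: "'n::finite \<Rightarrow> real" and m :: nat
  assumes pos: "\<forall>j k. 0 < 1 + x j * x k" and t: "0 \<le> t" "t \<le> 1"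
  shows "0 \<le> qf UNIV (\<lambda>j k. t * (1 + x j * x k) powr real m + (1 - t) - (1 + t * (x j * x k)) powr real m) v"
proof -
  define c where "c i = real (m choose i) * (t - t ^ i) + (if i = 0 then 1 - t else 0)" for i
  have c0: "0 \<le> c i" for i
  proof (cases "i = 0")
    case True thus ?thesis by (simp add: c_def)
  next
    case False
    hence "t ^ i \<le> t ^ 1" using t by (intro power_decreasing) auto
    thus ?thesis using False by (simp add: c_def)
  qed
  have "qf UNIV (\<lambda>j k. t * (1 + x j * x k) powr real m + (1 - t) - (1 + t * (x j * x k)) powr real m) v
      = qf UNIV (\<lambda>j k. \<Sum>i\<le>m. c i * (x j * x k) ^ i) v"
    unfolding c_def using int_entry[OF pos[rule_format] t] by simp
  also have "\<dots> = (\<Sum>i\<le>m. c i * (\<Sum>j\<in>UNIV. v j * x j ^ i)^2)"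
    by (simp add: qf_sum qf_scale power_mult_distrib qf_rank1)
  also have "0 \<le> \<dots>" using c0 by (intro sum_nonneg mult_nonneg_nonneg) auto
  finally show ?thesis .
qed

lemma big_case:
  fixes x :: "'n::finite \<Rightarrow> real"
  assumes pos: "\<forall>j k. 0 < 1 + x j * x k" and aN: "real CARD('n) \<le> \<alpha>" and N2: "2 \<le> CARD('n)"
    and t: "0 \<le> t" "t \<le> 1"
  shows "0 \<le> qf UNIV (\<lambda>j k. t * (1 + x j * x k) powr \<alpha> + (1 - t) - (1 + t * (x j * x k)) powr \<alpha>) v"
proof -
  have ps: "0 < 1 + x j * x k * s" if "0 \<le> s" "s \<le> 1" for j k s
    using pos_s[OF that pos[rule_format, of j k]] by (simp add: mult.commute)
  define \<phi> where "\<phi> s = qf UNIV (\<lambda>j k. (1 + x j * x k * s) powr \<alpha>) v" for s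
  define \<phi>1 where "\<phi>1 s = qf UNIV (\<lambda>j k. \<alpha> * (1 + x j * x k * s) powr (\<alpha> - 1) * (x j * x k)) v" for s
  define \<phi>2 where "\<phi>2 s = qf UNIV (\<lambda>j k. \<alpha> * ((\<alpha> - 1) * (1 + x j * x k * s) powr (\<alpha> - 1 - 1) * (x j * x k)) * (x j * x k)) v" for s
  have d1: "(\<phi> has_real_derivative \<phi>1 s) (at s)" if "0 \<le> s" "s \<le> 1" for s
    unfolding \<phi>_def \<phi>1_def qf_def
    by (intro DERIV_sum DERIV_cmult DERIV_cmult_right dpow ps that)
  have d2: "(\<phi>1 has_real_derivative \<phi>2 s) (at s)" if "0 \<le> s" "s \<le> 1" for s
    unfolding \<phi>1_def \<phi>2_def qf_def
    by (intro DERIV_sum DERIV_cmult DERIV_cmult_right dpow ps that)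
  have a2: "0 \<le> \<alpha> * (\<alpha> - 1)" using aN N2 by (intro mult_nonneg_nonneg) auto
  have p2: "0 \<le> \<phi>2 s" if "0 \<le> s" "s \<le> 1" for s
  proof -
    have "\<phi>2 s = (\<alpha> * (\<alpha> - 1)) * qf UNIV (\<lambda>j k. (1 + x j * x k * s) powr (\<alpha> - 2) * (x j ^ 2 * x k ^ 2)) v"
      unfolding \<phi>2_def qf_scale[symmetric] by (simp add: power2_eq_square mult_ac)
    also have "\<dots> = (\<alpha> * (\<alpha> - 1)) * qf UNIV (\<lambda>j k. (1 + x j * x k * s) powr (\<alpha> - 2)) (\<lambda>j. v j * x j ^ 2)"
      using qf_hadamard_rank1[of UNIV "\<lambda>j k. (1 + x j * x k * s) powr (\<alpha> - 2)" "\<lambda>j. x j ^ 2" v] by simp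
    also have "0 \<le> \<dots>"
    proof -
      have "psdI UNIV (\<lambda>j k. (1 + x j * x k * s) powr (\<alpha> - 2))"
      proof (rule FH)
        show "psdI UNIV (\<lambda>j k. 1 + x j * x k * s)" unfolding psdI_def
        proof
          fix w :: "'n \<Rightarrow> real"
          have "qf UNIV (\<lambda>j k. 1 + x j * x k * s) w = qf UNIV (\<lambda>j k. 1 * 1) w + s * qf UNIV (\<lambda>j k. x j * x k) w"
            unfolding qf_scale[symmetric] qf_add[symmetric] by (simp add: mult_ac)
          thus "0 \<le> qf UNIV (\<lambda>j k. 1 + x j * x k * s) w"
            unfolding qf_rank1[of UNIV "\<lambda>_. 1"] qf_rank1[of UNIV x] using that by simp
        qed
        show "symI UNIV (\<lambda>j k. 1 + x j * x k * s)" unfolding symI_def by (simp add: mult.commute)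
        show "\<forall>j\<in>UNIV. \<forall>k\<in>UNIV. 0 < 1 + x j * x k * s" using ps that by blast
        show "real (card (UNIV :: 'n set)) - 2 \<le> \<alpha> - 2" using aN by simp
      qed simp
      thus ?thesis using a2 unfolding psdI_def by simp
    qed
    finally show ?thesis .
  qed
  have mono1: "\<phi>1 a \<le> \<phi>1 b" if "0 \<le> a" "a \<le> b" "b \<le> 1" for a b
  proof (rule DERIV_nonneg_imp_nondecreasing[of a b \<phi>1])
    show "a \<le> b" by fact
    fix s assume "a \<le> s" "s \<le> b"
    thus "\<exists>y. DERIV \<phi>1 s :> y \<and> 0 \<le> y" using d2 p2 that by (meson order_trans)
  qed
  have cv: "convex_on {0..1} \<phi>"
    by (rule convex_on_realI[where f' = \<phi>1]) (use d1 mono1 in auto)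
  have "\<phi> ((1 - t) *\<^sub>R 0 + t *\<^sub>R 1) \<le> (1 - t) * \<phi> 0 + t * \<phi> 1"
    by (rule convex_onD[OF cv]) (use t in auto)
  hence cvx: "\<phi> t \<le> (1 - t) * \<phi> 0 + t * \<phi> 1" by simp
  have "qf UNIV (\<lambda>j k. t * (1 + x j * x k) powr \<alpha> + (1 - t) - (1 + t * (x j * x k)) powr \<alpha>) v
      = t * \<phi> 1 + (1 - t) * \<phi> 0 - \<phi> t"
  proof -
    have "qf UNIV (\<lambda>j k. t * (1 + x j * x k) powr \<alpha> + (1 - t) - (1 + t * (x j * x k)) powr \<alpha>) v
        = qf UNIV (\<lambda>j k. t * (1 + x j * x k * 1) powr \<alpha> + (1 - t) * (1 + x j * x k * 0) powr \<alpha>) v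
          - qf UNIV (\<lambda>j k. (1 + x j * x k * t) powr \<alpha>) v"
      by (subst qf_diff[symmetric]) (simp add: mult_ac)
    also have "\<dots> = t * \<phi> 1 + (1 - t) * \<phi> 0 - \<phi> t"
      unfolding \<phi>_def qf_add qf_scale ..
    finally show ?thesis .
  qed
  thus ?thesis using cvx by simp
qed

lemma quad_eq: "v \<bullet> (P *v v) = qf UNIV (\<lambda>j k. P $ j $ k) (\<lambda>j. v $ j)"
  unfolding inner_vec_def matrix_vector_mult_def qf_def
  by (simp add: sum_distrib_left mult_ac)

lemma psd_iff: "psd P \<longleftrightarrow> psdI UNIV (\<lambda>j k. P $ j $ k)"
  unfolding psd_def psdI_def
proof
  assume h: "\<forall>v. 0 \<le> v \<bullet> (P *v v)"
  show "\<forall>w. 0 \<le> qf UNIV (\<lambda>j k. P $ j $ k) w"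
  proof
    fix w :: "'a \<Rightarrow> real"
    have "0 \<le> (\<chi> j. w j) \<bullet> (P *v (\<chi> j. w j))" using h by blast
    moreover have e: "(($) (vec_lambda w)) = w" by (simp add: fun_eq_iff)
    ultimately show "0 \<le> qf UNIV (\<lambda>j k. P $ j $ k) w" unfolding quad_eq by simp
  qed
next
  assume h: "\<forall>w. 0 \<le> qf UNIV (\<lambda>j k. P $ j $ k) w"
  show "\<forall>v. 0 \<le> v \<bullet> (P *v v)" unfolding quad_eq using h by blast
qed

lemma entries:
  fixes x :: "real^'n::finite"
  shows "(t *\<^sub>R entrywise_powr ((\<chi> j k. 1 + x $ j * x $ k) :: real^'n^'n) \<alpha>
          + (1 - t) *\<^sub>R entrywise_powr ((\<chi> j k. 1) :: real^'n^'n) \<alpha>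
          - entrywise_powr (t *\<^sub>R ((\<chi> j k. 1 + x $ j * x $ k) :: real^'n^'n) + (1 - t) *\<^sub>R ((\<chi> j k. 1) :: real^'n^'n)) \<alpha>) $ j $ k
       = t * (1 + x $ j * x $ k) powr \<alpha> + (1 - t) - (1 + t * (x $ j * x $ k)) powr \<alpha>"
  by (simp add: entrywise_powr_def algebra_simps)

theorem mainTheorem12:
  fixes x :: "real^'n" and \<alpha> :: real
  assumes "CARD('n) \<ge> 2"
    and "inj (\<lambda>j. x $ j)"
    and "\<forall>j. x $ j \<noteq> 0"
    and "\<forall>j k. 1 + x $ j * x $ k > 0"
  shows "(\<forall>t::real. 0 \<le> t \<and> t \<le> 1 \<longrightarrow>
            (let A = (\<chi> j k. 1 + x $ j * x $ k) :: real^'n^'n;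
                 B = (\<chi> j k. 1) :: real^'n^'n
             in loewner_le (entrywise_powr (t *\<^sub>R A + (1 - t) *\<^sub>R B) \<alpha>)
                           (t *\<^sub>R entrywise_powr A \<alpha> + (1 - t) *\<^sub>R entrywise_powr B \<alpha>)))
         \<longleftrightarrow> ((\<exists>k::nat. \<alpha> = real k) \<or> \<alpha> \<ge> real CARD('n))"
proof -
  define xf where "xf j = x $ j" for j
  define G where "G t j k = t * (1 + xf j * xf k) powr \<alpha> + (1 - t) - (1 + t * (xf j * xf k)) powr \<alpha>" for t j k
  have pos: "\<forall>j k. 0 < 1 + xf j * xf k" using assms(4) unfolding xf_def by simp
  have equiv: "(let A = (\<chi> j k. 1 + x $ j * x $ k) :: real^'n^'n;
                 B = (\<chi> j k. 1) :: real^'n^'n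
             in loewner_le (entrywise_powr (t *\<^sub>R A + (1 - t) *\<^sub>R B) \<alpha>)
                           (t *\<^sub>R entrywise_powr A \<alpha> + (1 - t) *\<^sub>R entrywise_powr B \<alpha>))
        \<longleftrightarrow> psdI UNIV (G t)" for t
    unfolding Let_def loewner_le_def psd_iff entries G_def xf_def ..
  show ?thesis
  proof
    assume h: "\<forall>t::real. 0 \<le> t \<and> t \<le> 1 \<longrightarrow>
            (let A = (\<chi> j k. 1 + x $ j * x $ k) :: real^'n^'n;
                 B = (\<chi> j k. 1) :: real^'n^'n
             in loewner_le (entrywise_powr (t *\<^sub>R A + (1 - t) *\<^sub>R B) \<alpha>)
                           (t *\<^sub>R entrywise_powr A \<alpha> + (1 - t) *\<^sub>R entrywise_powr B \<alpha>))"
    show "(\<exists>k::nat. \<alpha> = real k) \<or> \<alpha> \<ge> real CARD('n)"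
    proof (rule ccontr)
      assume "\<not> ((\<exists>k::nat. \<alpha> = real k) \<or> \<alpha> \<ge> real CARD('n))"
      hence an: "\<forall>m::nat. \<alpha> \<noteq> real m" and aN: "\<alpha> < real CARD('n)" by auto
      have ix: "inj xf" using assms(2) unfolding xf_def by simp
      have x0: "\<forall>j. xf j \<noteq> 0" using assms(3) unfolding xf_def by simp
      obtain v where v: "qf UNIV (\<lambda>j k. (1 + xf j * xf k) powr \<alpha> - 1 - \<alpha> * (xf j * xf k)) v < 0"
        using not_psd_H[OF ix x0 pos an aN assms(1)] by blast
      obtain t where t: "0 < t" "t \<le> 1"
        "qf UNIV (\<lambda>j k. t * (1 + xf j * xf k) powr \<alpha> + (1 - t) - (1 + t * (xf j * xf k)) powr \<alpha>) v < 0"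
        using neg_M[of "\<lambda>j k. xf j * xf k" \<alpha> v] pos v by blast
      have "psdI UNIV (G t)" using h t equiv by auto
      hence "0 \<le> qf UNIV (G t) v" unfolding psdI_def by blast
      thus False using t(3) unfolding G_def by simp
    qed
  next
    assume h: "(\<exists>k::nat. \<alpha> = real k) \<or> \<alpha> \<ge> real CARD('n)"
    show "\<forall>t::real. 0 \<le> t \<and> t \<le> 1 \<longrightarrow>
            (let A = (\<chi> j k. 1 + x $ j * x $ k) :: real^'n^'n;
                 B = (\<chi> j k. 1) :: real^'n^'n
             in loewner_le (entrywise_powr (t *\<^sub>R A + (1 - t) *\<^sub>R B) \<alpha>)
                           (t *\<^sub>R entrywise_powr A \<alpha> + (1 - t) *\<^sub>R entrywise_powr B \<alpha>))"
    proof (intro allI impI)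
      fix t :: real assume t: "0 \<le> t \<and> t \<le> 1"
      have "psdI UNIV (G t)" unfolding psdI_def
      proof
        fix v
        from h show "0 \<le> qf UNIV (G t) v"
        proof
          assume "\<exists>k::nat. \<alpha> = real k"
          then obtain m :: nat where m: "\<alpha> = real m" by blast
          show ?thesis unfolding G_def m using int_case[OF pos, of t m v] t by simp
        next
          assume "\<alpha> \<ge> real CARD('n)"
          thus ?thesis unfolding G_def using big_case[OF pos _ assms(1), of \<alpha> t v] t by simp
        qed
      qed
      thus "let A = (\<chi> j k. 1 + x $ j * x $ k) :: real^'n^'n;
                 B = (\<chi> j k. 1) :: real^'n^'n
             in loewner_le (entrywise_powr (t *\<^sub>R A + (1 - t) *\<^sub>R B) \<alpha>)
                           (t *\<^sub>R entrywise_powr A \<alpha> + (1 - t) *\<^sub>R entrywise_powr B \<alpha>)"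
        using equiv by blast
    qed
  qed
qed

end
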